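(* Let $G$ be a connected graph with $n$ vertices and at least one edge, and let $\Lambda(G^{(3)})$ be the second-largest modulus among the eigenvalues of the $3$-power hypergraph $G^{(3)}$. Then $$\Lambda(G^{(3)})=\begin{cases}\sqrt[3]{\rho_V(G)^2}, & \text{if $G$ is a tree},\\ \max\{\sqrt[3]{\rho_V(G)^2},\sqrt[3]{\lambda_n(G)^2}\}, & \text{if $G$ is unicyclic with an odd cycle},\\ \max\{\sqrt[3]{\rho_V(G)^2},\sqrt[3]{\rho_\Gamma(G)^2}\}, & \text{if $G$ is bipartite but not a tree},\\ \max\{\sqrt[3]{\rho_V(G)^2},\sqrt[3]{\rho_\Gamma(G)^2},\sqrt[3]{\lambda_n(G)^2}\}, & \text{otherwise}.\end{cases}$$
   Context: For a graph $G=(V,E)$, the $3$-power hypergraph $G^{(3)}$ is the $3$-uniform hypergraph obtained by adding one new vertex $w_e$ to each edge $e$ (distinct for distinct edges) and taking hyperedges $e\cup\{w_e\}$. For a $3$-uniform hypergraph $H$ on $[n]$, $\lambda\in\mathbb{C}$ is an eigenvalue if there is a nonzero $\mathbf{x}\in\mathbb{C}^n$ with $\sum_{\{i,j,l\}\in E(H)} x_jx_l=\lambda x_i^{2}$ for every vertex $i$ (sum over hyperedges containing $i$, with $j,l$ the other two vertices); equivalently, eigenvalues of the adjacency tensor with entries $1/2$ on hyperedges. The second-largest modulus among the eigenvalues is the largest $|\mu|$ over eigenvalues with $|\mu|$ strictly less than the maximum modulus. $\lambda_n(G)$ is the smallest adjacency eigenvalue of $G$; $\rho(\cdot)$ is spectral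 radius; $\rho_V(G)=\max_{v\in V}\rho(G-v)$. A signed graph $G_\pi$ is $(G,\pi)$ with $\pi:E\to\{\pm1\}$, adjacency matrix having entry $\pi(\{i,j\})$ for adjacent $i,j$ and $0$ otherwise; $\Gamma(G)=\{G_\pi:\rho(G_\pi)<\rho(G)\}$ and $\rho_\Gamma(G)=\max_{G_\pi\in\Gamma(G)}\rho(G_\pi)$ (this set is nonempty in the last two cases). *)

theory Defs
  imports Complex_Main
begin

definition simple_graph :: "'a set \<Rightarrow> 'a set set \<Rightarrow> bool" where
  "simple_graph V E \<longleftrightarrow> finite V \<and>
     (\<forall>e\<in>E. \<exists>u v. u \<in> V \<and> v \<in> V \<and> u \<noteq> v \<and> e = {u, v})"

definition graph_connected :: "'a set \<Rightarrow> 'a set set \<Rightarrow> bool" where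
  "graph_connected V E \<longleftrightarrow>
     (\<forall>u\<in>V. \<forall>v\<in>V. (u, v) \<in> {(a, b). {a, b} \<in> E}\<^sup>*)"

definition is_tree :: "'a set \<Rightarrow> 'a set set \<Rightarrow> bool" where
  "is_tree V E \<longleftrightarrow> graph_connected V E \<and> card E + 1 = card V"

definition is_unicyclic :: "'a set \<Rightarrow> 'a set set \<Rightarrow> bool" where
  "is_unicyclic V E \<longleftrightarrow> graph_connected V E \<and> card E = card V"

definition is_bipartite :: "'a set \<Rightarrow> 'a set set \<Rightarrow> bool" where
  "is_bipartite V E \<longleftrightarrow> (\<exists>A\<subseteq>V. \<forall>e\<in>E. card (e \<inter> A) = 1)"

definition mat_eigenvalue :: "'a set \<Rightarrow> ('a \<Rightarrow> 'a \<Rightarrow> real) \<Rightarrow> complex \<Rightarrow> bool" where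
  "mat_eigenvalue V M \<mu> \<longleftrightarrow>
     (\<exists>x :: 'a \<Rightarrow> complex. (\<exists>v\<in>V. x v \<noteq> 0) \<and>
        (\<forall>v\<in>V. (\<Sum>u\<in>V. complex_of_real (M v u) * x u) = \<mu> * x v))"

definition spec_radius :: "'a set \<Rightarrow> ('a \<Rightarrow> 'a \<Rightarrow> real) \<Rightarrow> real" where
  "spec_radius V M = Max (cmod ` {\<mu>. mat_eigenvalue V M \<mu>})"

definition min_eigenvalue :: "'a set \<Rightarrow> ('a \<Rightarrow> 'a \<Rightarrow> real) \<Rightarrow> real" where
  "min_eigenvalue V M = Min {\<mu> :: real. mat_eigenvalue V M (complex_of_real \<mu>)}"

definition adj :: "'a set set \<Rightarrow> 'a \<Rightarrow> 'a \<Rightarrow> real" where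
  "adj E u v = (if {u, v} \<in> E then 1 else 0)"

definition signed_adj :: "'a set set \<Rightarrow> ('a set \<Rightarrow> real) \<Rightarrow> 'a \<Rightarrow> 'a \<Rightarrow> real" where
  "signed_adj E \<pi> u v = (if {u, v} \<in> E then \<pi> {u, v} else 0)"

definition lambda_min :: "'a set \<Rightarrow> 'a set set \<Rightarrow> real" where
  "lambda_min V E = min_eigenvalue V (adj E)"

definition graph_rho :: "'a set \<Rightarrow> 'a set set \<Rightarrow> real" where
  "graph_rho V E = spec_radius V (adj E)"

definition rho_V :: "'a set \<Rightarrow> 'a set set \<Rightarrow> real" where
  "rho_V V E = Max ((\<lambda>v. graph_rho (V - {v}) {e\<in>E. v \<notin> e}) ` V)"

definition rho_Gamma :: "'a set \<Rightarrow> 'a set set \<Rightarrow> real" where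
  "rho_Gamma V E = Max {spec_radius V (signed_adj E \<pi>) | \<pi>.
      (\<forall>e\<in>E. \<pi> e = 1 \<or> \<pi> e = -1) \<and>
      spec_radius V (signed_adj E \<pi>) < graph_rho V E}"

definition hg_eigenvalue :: "'b set \<Rightarrow> 'b set set \<Rightarrow> complex \<Rightarrow> bool" where
  "hg_eigenvalue VH EH lam \<longleftrightarrow>
     (\<exists>x :: 'b \<Rightarrow> complex. (\<exists>i\<in>VH. x i \<noteq> 0) \<and>
        (\<forall>i\<in>VH. (\<Sum>h\<in>{h\<in>EH. i \<in> h}. \<Prod>j\<in>h - {i}. x j) = lam * (x i)\<^sup>2))"

definition power3_vertices :: "'a set \<Rightarrow> 'a set set \<Rightarrow> ('a + 'a set) set" where
  "power3_vertices V E = Inl ` V \<union> Inr ` E"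

definition power3_edges :: "'a set set \<Rightarrow> ('a + 'a set) set set" where
  "power3_edges E = (\<lambda>e. insert (Inr e) (Inl ` e)) ` E"

definition second_largest_modulus :: "complex set \<Rightarrow> real" where
  "second_largest_modulus S =
     (let m = Max (cmod ` S) in Max {r. \<exists>\<mu>\<in>S. r = cmod \<mu> \<and> r < m})"

definition Lambda3 :: "'a set \<Rightarrow> 'a set set \<Rightarrow> real" where
  "Lambda3 V E = second_largest_modulus
      {lam. hg_eigenvalue (power3_vertices V E) (power3_edges E) lam}"

end

theory Submission imports Defs "HOL-Analysis.Analysis" "Jordan_Normal_Form.Spectral_Radius" begin

definition mv :: "'a set \<Rightarrow> ('a \<Rightarrow> 'a \<Rightarrow> real) \<Rightarrow> ('a \<Rightarrow> real) \<Rightarrow> 'a \<Rightarrow> real" where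
  "mv V M x u = (\<Sum>w\<in>V. M u w * x w)"
definition bf :: "'a set \<Rightarrow> ('a \<Rightarrow> 'a \<Rightarrow> real) \<Rightarrow> ('a \<Rightarrow> real) \<Rightarrow> ('a \<Rightarrow> real) \<Rightarrow> real" where
  "bf V M x y = (\<Sum>u\<in>V. \<Sum>w\<in>V. M u w * x u * y w)"
definition qf :: "'a set \<Rightarrow> ('a \<Rightarrow> 'a \<Rightarrow> real) \<Rightarrow> ('a \<Rightarrow> real) \<Rightarrow> real" where
  "qf V M x = bf V M x x"
definition ip :: "'a set \<Rightarrow> ('a \<Rightarrow> real) \<Rightarrow> ('a \<Rightarrow> real) \<Rightarrow> real" where
  "ip V x y = (\<Sum>u\<in>V. x u * y u)"
definition nrm :: "'a set \<Rightarrow> ('a \<Rightarrow> real) \<Rightarrow> real" where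
  "nrm V x = ip V x x"
definition symm :: "'a set \<Rightarrow> ('a \<Rightarrow> 'a \<Rightarrow> real) \<Rightarrow> bool" where
  "symm V M = (\<forall>u\<in>V. \<forall>w\<in>V. M u w = M w u)"
definition reig :: "'a set \<Rightarrow> ('a \<Rightarrow> 'a \<Rightarrow> real) \<Rightarrow> real \<Rightarrow> ('a \<Rightarrow> real) \<Rightarrow> bool" where
  "reig V M \<mu> z = ((\<exists>u\<in>V. z u \<noteq> 0) \<and> (\<forall>u\<in>V. mv V M z u = \<mu> * z u))"
definition ismax :: "'a set \<Rightarrow> ('a \<Rightarrow> 'a \<Rightarrow> real) \<Rightarrow> real \<Rightarrow> ('a \<Rightarrow> real) \<Rightarrow> bool" where
  "ismax V M L q = (nrm V q = 1 \<and> qf V M q = L \<and> (\<forall>y. qf V M y \<le> L * nrm V y))"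

lemma bf_mv: "bf V M x y = (\<Sum>u\<in>V. x u * mv V M y u)"
  unfolding bf_def mv_def by (simp add: sum_distrib_left mult.assoc mult.left_commute)

lemma bf_sym: assumes "symm V M" shows "bf V M x y = bf V M y x"
proof -
  have "bf V M x y = (\<Sum>w\<in>V. \<Sum>u\<in>V. M u w * x u * y w)" unfolding bf_def by (rule sum.swap)
  also have "\<dots> = bf V M y x" unfolding bf_def
    by (intro sum.cong refl) (use assms in \<open>auto simp: symm_def mult.commute mult.left_commute\<close>)
  finally show ?thesis .
qed

lemma qf_expand: assumes "symm V M"
  shows "qf V M (\<lambda>u. x u + t * d u) = qf V M x + 2 * t * bf V M x d + t^2 * qf V M d"
proof -
  have "qf V M (\<lambda>u. x u + t * d u) = bf V M x x + t * bf V M x d + t * bf V M d x + t^2 * bf V M d d"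
    unfolding qf_def bf_def
    by (simp add: algebra_simps sum.distrib sum_distrib_left power2_eq_square)
  then show ?thesis using bf_sym[OF assms, of d x] unfolding qf_def by simp
qed

lemma nrm_expand: "nrm V (\<lambda>u. x u + t * d u) = nrm V x + 2 * t * ip V x d + t^2 * nrm V d"
  unfolding nrm_def ip_def
  by (simp add: algebra_simps sum.distrib sum_distrib_left power2_eq_square)

lemma ab_zero:
  fixes a b :: real
  assumes "\<And>t. a * t + b * t^2 \<le> 0" shows "a = 0"
proof (rule ccontr)
  assume "a \<noteq> 0"
  define t where "t = a / (\<bar>b\<bar> + 1)"
  have d: "\<bar>b\<bar> + 1 > 0" by simp
  have h0: "-\<bar>b\<bar> * t^2 \<le> b * t^2"
    by (rule mult_right_mono) (use abs_ge_minus_self[of b] in auto)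
  have h2: "a * t - \<bar>b\<bar> * t^2 = t^2"
  proof -
    have "t * (\<bar>b\<bar> + 1) = a" unfolding t_def using d by simp
    then have "a = t * \<bar>b\<bar> + t" by (simp add: algebra_simps)
    then show ?thesis by (simp add: power2_eq_square algebra_simps)
  qed
  have h3: "t^2 > 0" using \<open>a \<noteq> 0\<close> d unfolding t_def by simp
  show False using assms[of t] h0 h2 h3 by linarith
qed

lemma nrm_nonneg: "nrm V x \<ge> 0"
  unfolding nrm_def ip_def by (simp add: sum_nonneg)

lemma nrm_zero_iff: assumes "finite V" shows "nrm V x = 0 \<longleftrightarrow> (\<forall>u\<in>V. x u = 0)"
  unfolding nrm_def ip_def using assms by (simp add: sum_nonneg_eq_0_iff)

lemma nrm_pos: assumes "finite V" "u \<in> V" "x u \<noteq> 0" shows "nrm V x > 0"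
  using nrm_nonneg[of V x] nrm_zero_iff[OF assms(1), of x] assms by force

lemma ismax_eig:
  assumes fin: "finite V" and s: "symm V M" and m: "ismax V M L q"
  shows "\<forall>u\<in>V. mv V M q u = L * q u"
proof -
  define r where "r u = mv V M q u - L * q u" for u
  have n1: "nrm V q = 1" and q1: "qf V M q = L" and mx: "\<And>y. qf V M y \<le> L * nrm V y"
    using m unfolding ismax_def by auto
  have "\<And>t. 2 * (bf V M q r - L * ip V q r) * t + (qf V M r - L * nrm V r) * t^2 \<le> 0"
  proof -
    fix t :: real
    have "qf V M (\<lambda>u. q u + t * r u) \<le> L * nrm V (\<lambda>u. q u + t * r u)" by (rule mx)
    then show "2 * (bf V M q r - L * ip V q r) * t + (qf V M r - L * nrm V r) * t^2 \<le> 0"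
      unfolding qf_expand[OF s] nrm_expand n1 q1 by (simp add: algebra_simps)
  qed
  from ab_zero[OF this] have e: "bf V M q r = L * ip V q r" by simp
  have "bf V M q r = bf V M r q" by (rule bf_sym[OF s])
  also have "\<dots> = (\<Sum>u\<in>V. r u * mv V M q u)" by (rule bf_mv)
  finally have "(\<Sum>u\<in>V. r u * mv V M q u) - L * ip V q r = 0" using e by simp
  moreover have "(\<Sum>u\<in>V. r u * mv V M q u) - L * ip V q r = nrm V r"
    unfolding nrm_def ip_def r_def by (simp add: sum_subtractf[symmetric] sum_distrib_left algebra_simps)
  ultimately have "nrm V r = 0" by simp
  then show ?thesis using nrm_zero_iff[OF fin] unfolding r_def by simp
qed



lemma qf_cong: "(\<And>u. u \<in> V \<Longrightarrow> x u = y u) \<Longrightarrow> qf V M x = qf V M y"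
  unfolding qf_def bf_def by (intro sum.cong refl) auto
lemma nrm_cong: "(\<And>u. u \<in> V \<Longrightarrow> x u = y u) \<Longrightarrow> nrm V x = nrm V y"
  unfolding nrm_def ip_def by (intro sum.cong refl) auto
lemma qf_scale: "qf V M (\<lambda>u. k * x u) = k^2 * qf V M x"
  unfolding qf_def bf_def by (simp add: sum_distrib_left power2_eq_square algebra_simps)
lemma nrm_scale: "nrm V (\<lambda>u. k * x u) = k^2 * nrm V x"
  unfolding nrm_def ip_def by (simp add: sum_distrib_left power2_eq_square algebra_simps)
lemma qf_zero: "(\<And>u. u \<in> V \<Longrightarrow> x u = 0) \<Longrightarrow> qf V M x = 0"
  unfolding qf_def bf_def by simp

lemma exists_max:
  assumes fin: "finite V" and ne: "V \<noteq> {}"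
  shows "\<exists>L q. ismax V M L q"
proof -
  define X where "X = product_topology (\<lambda>_. euclideanreal) V"
  define f where "f x = (\<Sum>u\<in>V. (x u)^2)" for x :: "'a \<Rightarrow> real"
  define C where "C = {x \<in> topspace X. f x \<in> {1}}"
  have cf: "continuous_map X euclideanreal f"
    unfolding f_def X_def
    by (intro continuous_map_sum continuous_map_real_pow continuous_map_product_projection fin) auto
  have cq: "continuous_map X euclideanreal (qf V M)"
    unfolding qf_def bf_def X_def
    by (intro continuous_map_sum continuous_map_real_mult continuous_map_product_projection fin
          continuous_map_canonical_const) auto
  have K: "compactin X (PiE V (\<lambda>_. {-1..1}))"
    unfolding X_def by (subst compactin_PiE) auto
  have sub: "C \<subseteq> PiE V (\<lambda>_. {-1..1})"
  proof
    fix x assume "x \<in> C"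
    then have x: "x \<in> PiE V (\<lambda>_. UNIV)" "f x = 1" unfolding C_def X_def by auto
    have "\<bar>x u\<bar> \<le> 1" if "u \<in> V" for u
    proof -
      have "(x u)^2 \<le> f x" unfolding f_def
        by (rule member_le_sum[OF that _ fin]) auto
      then have "(x u)^2 \<le> 1^2" using x by simp
      then show ?thesis using abs_le_square_iff[of "x u" 1] by simp
    qed
    then show "x \<in> PiE V (\<lambda>_. {-1..1})" using x(1) by (auto simp: PiE_def abs_le_iff)
  qed
  have cl: "closedin X C" unfolding C_def by (rule closedin_continuous_map_preimage[OF cf]) auto
  have CK: "compactin X C" by (rule closed_compactin[OF K sub cl])
  have "compactin euclideanreal (qf V M ` C)" by (rule image_compactin[OF CK cq])
  then have cpt: "compact (qf V M ` C)" by simp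
  obtain u0 where u0: "u0 \<in> V" using ne by auto
  define e where "e = restrict (\<lambda>u. if u = u0 then 1 else (0::real)) V"
  have "f e = 1" unfolding f_def e_def using fin u0
    by (simp add: if_distrib[of "\<lambda>x. x^2"] sum.delta cong: if_cong)
  then have "e \<in> C" unfolding C_def X_def e_def by auto
  then have "qf V M ` C \<noteq> {}" by auto
  from compact_attains_sup[OF cpt this] obtain q where q: "q \<in> C" "\<And>y. y \<in> C \<Longrightarrow> qf V M y \<le> qf V M q"
    by auto
  have nq: "nrm V q = 1" using q(1) unfolding C_def f_def nrm_def ip_def by (simp add: power2_eq_square)
  have "qf V M y \<le> qf V M q * nrm V y" for y
  proof (cases "nrm V y = 0")
    case True
    then have "qf V M y = 0" using nrm_zero_iff[OF fin] qf_zero by metis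
    then show ?thesis using True by simp
  next
    case False
    then have np: "nrm V y > 0" using nrm_nonneg[of V y] by simp
    define k where "k = 1 / sqrt (nrm V y)"
    define y' where "y' = restrict (\<lambda>u. k * y u) V"
    have ky: "k^2 * nrm V y = 1" unfolding k_def using np by (simp add: power_divide)
    have "nrm V y' = 1" using nrm_cong[of V y' "\<lambda>u. k * y u"] nrm_scale[where V=V and k=k and x=y] ky unfolding y'_def by simp
    then have "y' \<in> C" unfolding C_def X_def f_def y'_def nrm_def ip_def by (auto simp: power2_eq_square)
    then have "qf V M y' \<le> qf V M q" by (rule q(2))
    moreover have "qf V M y' = k^2 * qf V M y" using qf_cong[of V y' "\<lambda>u. k * y u"] qf_scale[where V=V and M=M and k=k and x=y]
      unfolding y'_def by simp
    ultimately have "k^2 * qf V M y \<le> qf V M q" by simp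
    then have "k^2 * qf V M y * nrm V y \<le> qf V M q * nrm V y" using np by (simp add: mult_right_mono)
    then show ?thesis using ky by (metis mult.assoc mult.commute mult_1)
  qed
  then have "ismax V M (qf V M q) q" unfolding ismax_def using nq by simp
  then show ?thesis by blast
qed



lemma finite_eigs:
  assumes fin: "finite V"
  shows "finite {c. mat_eigenvalue V M c}"
proof -
  define n where "n = card V"
  obtain f where f: "bij_betw f {0..<n} V" using ex_bij_betw_nat_finite[OF fin] unfolding n_def by blast
  define A where "A = Matrix.mat n n (\<lambda>(i,j). complex_of_real (M (f i) (f j)))"
  have A: "A \<in> carrier_mat n n" unfolding A_def by simp
  have "{c. mat_eigenvalue V M c} \<subseteq> Spectral_Radius.spectrum A"
  proof
    fix c assume "c \<in> {c. mat_eigenvalue V M c}"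
    then obtain x w where w: "w \<in> V" "x w \<noteq> 0"
      and eq: "\<And>v. v \<in> V \<Longrightarrow> (\<Sum>u\<in>V. complex_of_real (M v u) * x u) = c * x v"
      unfolding mat_eigenvalue_def by auto
    define v where "v = Matrix.vec n (\<lambda>i. x (f i))"
    obtain i where i: "i < n" "f i = w" using f w(1) unfolding bij_betw_def by auto
    have vc: "v \<in> carrier_vec n" unfolding v_def by simp
    have v0: "v \<noteq> 0\<^sub>v n"
    proof
      assume "v = 0\<^sub>v n"
      then have "v $ i = 0" using i by simp
      then show False using i w unfolding v_def by simp
    qed
    have "A *\<^sub>v v = c \<cdot>\<^sub>v v"
    proof (rule eq_vecI)
      show "dim_vec (A *\<^sub>v v) = dim_vec (c \<cdot>\<^sub>v v)" using A vc by simp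
      fix k assume "k < dim_vec (c \<cdot>\<^sub>v v)"
      then have k: "k < n" using vc by simp
      have "(A *\<^sub>v v) $ k = (\<Sum>j\<in>{0..<n}. complex_of_real (M (f k) (f j)) * x (f j))"
        using k A unfolding v_def A_def by (simp add: scalar_prod_def)
      also have "\<dots> = (\<Sum>u\<in>V. complex_of_real (M (f k) u) * x u)"
        by (rule sum.reindex_bij_betw[OF f])
      also have "\<dots> = c * x (f k)" using eq f k unfolding bij_betw_def by auto
      also have "\<dots> = (c \<cdot>\<^sub>v v) $ k" using k unfolding v_def by simp
      finally show "(A *\<^sub>v v) $ k = (c \<cdot>\<^sub>v v) $ k" .
    qed
    then have "eigenvector A v c" unfolding eigenvector_def using vc v0 A by simp
    then show "c \<in> Spectral_Radius.spectrum A" unfolding Spectral_Radius.spectrum_def eigenvalue_def by auto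
  qed
  moreover have "finite (Spectral_Radius.spectrum A)" by (rule card_finite_spectrum(1)[OF A])
  ultimately show ?thesis by (rule finite_subset)
qed



lemma reig_mat_eig: assumes "reig V M \<mu> z" shows "mat_eigenvalue V M (complex_of_real \<mu>)"
proof -
  have "\<forall>v\<in>V. (\<Sum>u\<in>V. complex_of_real (M v u) * complex_of_real (z u)) = complex_of_real \<mu> * complex_of_real (z v)"
  proof
    fix v assume v: "v \<in> V"
    have "(\<Sum>u\<in>V. complex_of_real (M v u) * complex_of_real (z u)) = complex_of_real (mv V M z v)"
      unfolding mv_def by simp
    then show "(\<Sum>u\<in>V. complex_of_real (M v u) * complex_of_real (z u)) = complex_of_real \<mu> * complex_of_real (z v)"
      using assms v unfolding reig_def by simp
  qed
  moreover have "\<exists>v\<in>V. complex_of_real (z v) \<noteq> 0" using assms unfolding reig_def by auto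
  ultimately show ?thesis unfolding mat_eigenvalue_def by (intro exI[of _ "\<lambda>u. complex_of_real (z u)"]) auto
qed

lemma eig_real:
  assumes fin: "finite V" and s: "symm V M" and e: "mat_eigenvalue V M c"
  shows "Im c = 0"
proof -
  obtain x w where w: "w \<in> V" "x w \<noteq> 0"
    and eq: "\<And>v. v \<in> V \<Longrightarrow> (\<Sum>u\<in>V. complex_of_real (M v u) * x u) = c * x v"
    using e unfolding mat_eigenvalue_def by auto
  define S where "S = (\<Sum>u\<in>V. \<Sum>v\<in>V. complex_of_real (M u v) * cnj (x u) * x v)"
  have "cnj S = (\<Sum>u\<in>V. \<Sum>v\<in>V. complex_of_real (M u v) * x u * cnj (x v))"
    unfolding S_def by (simp add: cnj_sum)
  also have "\<dots> = (\<Sum>v\<in>V. \<Sum>u\<in>V. complex_of_real (M u v) * x u * cnj (x v))" by (rule sum.swap)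
  also have "\<dots> = S" unfolding S_def
    by (intro sum.cong refl) (use s in \<open>auto simp: symm_def mult.commute mult.left_commute\<close>)
  finally have cS: "cnj S = S" .
  define N where "N = (\<Sum>u\<in>V. (cmod (x u))^2)"
  have Npos: "N > 0" unfolding N_def
    by (rule sum_pos2[OF fin w(1)]) (use w in auto)
  have "S = (\<Sum>u\<in>V. cnj (x u) * (\<Sum>v\<in>V. complex_of_real (M u v) * x v))"
    unfolding S_def by (simp add: sum_distrib_left mult.commute mult.left_commute)
  also have "\<dots> = (\<Sum>u\<in>V. c * (cnj (x u) * x u))"
  proof (intro sum.cong refl)
    fix u assume u: "u \<in> V"
    have "cnj (x u) * (\<Sum>v\<in>V. complex_of_real (M u v) * x v) = cnj (x u) * (c * x u)"
      by (simp only: eq[OF u])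
    then show "cnj (x u) * (\<Sum>v\<in>V. complex_of_real (M u v) * x v) = c * (cnj (x u) * x u)"
      by (simp add: algebra_simps)
  qed
  also have "\<dots> = c * complex_of_real N"
    unfolding N_def of_real_sum sum_distrib_left
    by (intro sum.cong refl) (simp only: complex_norm_square mult.commute)
  finally have "S = c * complex_of_real N" .
  moreover have "Im S = 0" using cS by (metis Reals_cnj_iff complex_is_Real_iff)
  ultimately have "Im c * N = 0" by simp
  then show ?thesis using Npos by simp
qed

lemma eig_real_vec:
  assumes fin: "finite V" and s: "symm V M" and e: "mat_eigenvalue V M c"
  shows "\<exists>\<mu> z. c = complex_of_real \<mu> \<and> reig V M \<mu> z"
proof -
  have ic: "Im c = 0" by (rule eig_real[OF assms])
  obtain x w where w: "w \<in> V" "x w \<noteq> 0"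
    and eq: "\<And>v. v \<in> V \<Longrightarrow> (\<Sum>u\<in>V. complex_of_real (M v u) * x u) = c * x v"
    using e unfolding mat_eigenvalue_def by auto
  have c: "c = complex_of_real (Re c)" using ic by (simp add: complex_eq_iff)
  have re: "mv V M (\<lambda>u. Re (x u)) v = Re c * Re (x v)" if "v \<in> V" for v
  proof -
    have "Re (\<Sum>u\<in>V. complex_of_real (M v u) * x u) = Re (c * x v)" using eq[OF that] by simp
    then show ?thesis unfolding mv_def using ic by (simp add: Re_sum)
  qed
  have im: "mv V M (\<lambda>u. Im (x u)) v = Re c * Im (x v)" if "v \<in> V" for v
  proof -
    have "Im (\<Sum>u\<in>V. complex_of_real (M v u) * x u) = Im (c * x v)" using eq[OF that] by simp
    then show ?thesis unfolding mv_def using ic by (simp add: Im_sum)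
  qed
  show ?thesis
  proof (cases "Re (x w) = 0")
    case True
    then have "Im (x w) \<noteq> 0" using w(2) by (simp add: complex_eq_iff)
    then have "reig V M (Re c) (\<lambda>u. Im (x u))" unfolding reig_def using im w(1) by auto
    then show ?thesis using c by blast
  next
    case False
    then have "reig V M (Re c) (\<lambda>u. Re (x u))" unfolding reig_def using re w(1) by auto
    then show ?thesis using c by blast
  qed
qed

lemma ismax_reig:
  assumes "finite V" "symm V M" "ismax V M L q" shows "reig V M L q"
proof -
  have "nrm V q = 1" using assms(3) unfolding ismax_def by simp
  then have "\<exists>u\<in>V. q u \<noteq> 0" using nrm_zero_iff[OF assms(1), of q] by auto
  then show ?thesis unfolding reig_def using ismax_eig[OF assms] by auto
qed

lemma sr_ge:
  assumes fin: "finite V" and e: "mat_eigenvalue V M c"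
  shows "cmod c \<le> spec_radius V M"
  unfolding spec_radius_def
  by (rule Max_ge) (use finite_eigs[OF fin, of M] e in auto)

lemma sr_attained:
  assumes fin: "finite V" and ne: "V \<noteq> {}" and s: "symm V M"
  shows "\<exists>\<mu> z. reig V M \<mu> z \<and> \<bar>\<mu>\<bar> = spec_radius V M"
proof -
  obtain L q where "ismax V M L q" using exists_max[OF fin ne] by blast
  then have "mat_eigenvalue V M (complex_of_real L)" using ismax_reig[OF fin s] reig_mat_eig by blast
  then have ne2: "cmod ` {c. mat_eigenvalue V M c} \<noteq> {}" by auto
  have "spec_radius V M \<in> cmod ` {c. mat_eigenvalue V M c}"
    unfolding spec_radius_def by (rule Max_in) (use finite_eigs[OF fin, of M] ne2 in auto)
  then obtain c where c: "mat_eigenvalue V M c" "spec_radius V M = cmod c" by auto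
  from eig_real_vec[OF fin s c(1)] obtain \<mu> z where "c = complex_of_real \<mu>" "reig V M \<mu> z" by blast
  then show ?thesis using c(2) by auto
qed

lemma sr_rayleigh:
  assumes fin: "finite V" and ne: "V \<noteq> {}" and s: "symm V M"
  shows "qf V M y \<le> spec_radius V M * nrm V y"
proof -
  obtain L q where m: "ismax V M L q" using exists_max[OF fin ne] by blast
  then have "mat_eigenvalue V M (complex_of_real L)" using ismax_reig[OF fin s] reig_mat_eig by blast
  then have "cmod (complex_of_real L) \<le> spec_radius V M" by (rule sr_ge[OF fin])
  then have "L \<le> spec_radius V M" by simp
  then have "L * nrm V y \<le> spec_radius V M * nrm V y" using nrm_nonneg by (rule mult_right_mono)
  moreover have "qf V M y \<le> L * nrm V y" using m unfolding ismax_def by blast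
  ultimately show ?thesis by linarith
qed

lemma triangle:
  assumes e: "reig V B \<mu> z" and b: "\<And>u w. u \<in> V \<Longrightarrow> w \<in> V \<Longrightarrow> \<bar>B u w\<bar> \<le> M u w"
  shows "\<bar>\<mu>\<bar> * nrm V z \<le> qf V M (\<lambda>u. \<bar>z u\<bar>)"
proof -
  have row: "\<bar>\<mu>\<bar> * \<bar>z u\<bar> \<le> (\<Sum>w\<in>V. M u w * \<bar>z w\<bar>)" if u: "u \<in> V" for u
  proof -
    have "\<bar>\<mu>\<bar> * \<bar>z u\<bar> = \<bar>\<Sum>w\<in>V. B u w * z w\<bar>" using e u unfolding reig_def mv_def by (simp add: abs_mult)
    also have "\<dots> \<le> (\<Sum>w\<in>V. \<bar>B u w * z w\<bar>)" by (rule sum_abs)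
    also have "\<dots> \<le> (\<Sum>w\<in>V. M u w * \<bar>z w\<bar>)"
      by (intro sum_mono) (simp add: abs_mult b u mult_right_mono)
    finally show ?thesis .
  qed
  have "\<bar>\<mu>\<bar> * nrm V z = (\<Sum>u\<in>V. \<bar>z u\<bar> * (\<bar>\<mu>\<bar> * \<bar>z u\<bar>))"
    unfolding nrm_def ip_def by (simp add: sum_distrib_left abs_mult_self_eq mult.commute mult.left_commute)
  also have "\<dots> \<le> (\<Sum>u\<in>V. \<bar>z u\<bar> * (\<Sum>w\<in>V. M u w * \<bar>z w\<bar>))"
    by (intro sum_mono mult_left_mono row) auto
  also have "\<dots> = qf V M (\<lambda>u. \<bar>z u\<bar>)" unfolding qf_def bf_mv mv_def by simp
  finally show ?thesis .
qed



lemma adj_sym: "adj E u v = adj E v u"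
  unfolding adj_def by (simp add: insert_commute)
lemma symm_adj: "symm V (adj E)" unfolding symm_def using adj_sym by metis
lemma signed_adj_sym: "signed_adj E c u v = signed_adj E c v u"
  unfolding signed_adj_def by (simp add: insert_commute)
lemma symm_signed_adj: "symm V (signed_adj E c)" unfolding symm_def using signed_adj_sym by metis
lemma adj_nonneg: "adj E u v \<ge> 0" unfolding adj_def by simp

locale sgraph =
  fixes V :: "'a set" and E :: "'a set set"
  assumes sg: "simple_graph V E" and conn: "graph_connected V E" and ne: "E \<noteq> {}"
begin

lemma fin: "finite V" using sg unfolding simple_graph_def by simp

lemma edge: "e \<in> E \<Longrightarrow> \<exists>u v. u \<in> V \<and> v \<in> V \<and> u \<noteq> v \<and> e = {u, v}"
  using sg unfolding simple_graph_def by blast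

lemma edge_in: "{u, v} \<in> E \<Longrightarrow> u \<in> V \<and> v \<in> V \<and> u \<noteq> v"
  using edge[of "{u,v}"] by (auto simp: doubleton_eq_iff)

lemma adj_diag: "adj E u u = 0"
  unfolding adj_def using edge_in[of u u] by auto

lemma Vne: "V \<noteq> {}" using ne edge by blast

lemma signed_le: assumes "\<forall>e\<in>E. c e = 1 \<or> c e = -1"
  shows "\<bar>signed_adj E c u v\<bar> \<le> adj E u v"
  using assms unfolding signed_adj_def adj_def by auto

lemma rho_ismax: "\<exists>p. ismax V (adj E) (graph_rho V E) p"
proof -
  obtain L p where m: "ismax V (adj E) L p" using exists_max[OF fin Vne] by blast
  have r: "reig V (adj E) L p" by (rule ismax_reig[OF fin symm_adj m])
  have "cmod (complex_of_real L) \<le> graph_rho V E"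
    unfolding graph_rho_def by (rule sr_ge[OF fin reig_mat_eig[OF r]])
  then have le: "L \<le> graph_rho V E" by simp
  obtain \<mu> z where z: "reig V (adj E) \<mu> z" "\<bar>\<mu>\<bar> = graph_rho V E"
    using sr_attained[OF fin Vne symm_adj] unfolding graph_rho_def by blast
  have "\<bar>\<mu>\<bar> * nrm V z \<le> qf V (adj E) (\<lambda>u. \<bar>z u\<bar>)"
    by (rule triangle[OF z(1)]) (simp add: adj_nonneg)
  also have "\<dots> \<le> L * nrm V (\<lambda>u. \<bar>z u\<bar>)" using m unfolding ismax_def by blast
  also have "nrm V (\<lambda>u. \<bar>z u\<bar>) = nrm V z" unfolding nrm_def ip_def by (simp add: abs_mult_self_eq)
  finally have "\<bar>\<mu>\<bar> * nrm V z \<le> L * nrm V z" .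
  moreover have "nrm V z > 0" using z(1) nrm_pos[OF fin] unfolding reig_def by blast
  ultimately have "\<bar>\<mu>\<bar> \<le> L" by simp
  then have "L = graph_rho V E" using le z(2) by simp
  then show ?thesis using m by blast
qed

definition rho where "rho = graph_rho V E"

lemma rho_bound: "qf V (adj E) y \<le> rho * nrm V y"
  using rho_ismax unfolding ismax_def rho_def by blast

lemma eig_bound:
  assumes e: "reig V B \<mu> z" and b: "\<And>u w. u \<in> V \<Longrightarrow> w \<in> V \<Longrightarrow> \<bar>B u w\<bar> \<le> adj E u w"
  shows "\<bar>\<mu>\<bar> \<le> rho"
proof -
  have "\<bar>\<mu>\<bar> * nrm V z \<le> qf V (adj E) (\<lambda>u. \<bar>z u\<bar>)" by (rule triangle[OF e b])
  also have "\<dots> \<le> rho * nrm V (\<lambda>u. \<bar>z u\<bar>)" by (rule rho_bound)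
  also have "nrm V (\<lambda>u. \<bar>z u\<bar>) = nrm V z" unfolding nrm_def ip_def by (simp add: abs_mult_self_eq)
  finally have "\<bar>\<mu>\<bar> * nrm V z \<le> rho * nrm V z" .
  moreover have "nrm V z > 0" using e nrm_pos[OF fin] unfolding reig_def by blast
  ultimately show ?thesis by simp
qed

lemma rho_pos: "rho \<ge> 1"
proof -
  obtain e where "e \<in> E" using ne by auto
  then obtain a b where ab: "a \<in> V" "b \<in> V" "a \<noteq> b" "{a,b} \<in> E" using edge by blast
  define y where "y u = (if u = a then 1 else 0) + (if u = b then (1::real) else 0)" for u
  have mvy: "mv V (adj E) y u = adj E u a + adj E u b" for u
    unfolding mv_def y_def using ab fin by (simp add: sum.distrib distrib_left if_distrib[of "\<lambda>x. _ * x"] cong: if_cong)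
  have "qf V (adj E) y = (\<Sum>u\<in>V. y u * (adj E u a + adj E u b))" unfolding qf_def bf_mv mvy ..
  also have "\<dots> = adj E a a + adj E a b + (adj E b a + adj E b b)"
    unfolding y_def using ab fin by (simp add: sum.distrib distrib_right if_distrib[of "\<lambda>x. x * _"] cong: if_cong)
  also have "\<dots> = 2" using ab(4) adj_diag by (simp add: adj_def insert_commute)
  finally have q: "qf V (adj E) y = 2" .
  have "nrm V y = 2" unfolding nrm_def ip_def y_def using ab fin
    by (simp add: sum.distrib distrib_right distrib_left if_distrib[of "\<lambda>x. x * _"] cong: if_cong)
  then show ?thesis using rho_bound[of y] q by simp
qed

lemma abs_ismax: assumes m: "ismax V (adj E) L q" shows "ismax V (adj E) L (\<lambda>u. \<bar>q u\<bar>)"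
proof -
  have n: "nrm V (\<lambda>u. \<bar>q u\<bar>) = nrm V q" unfolding nrm_def ip_def by (simp add: abs_mult_self_eq)
  have "qf V (adj E) q \<le> qf V (adj E) (\<lambda>u. \<bar>q u\<bar>)"
    unfolding qf_def bf_def
  proof (intro sum_mono)
    fix u w
    show "adj E u w * q u * q w \<le> adj E u w * \<bar>q u\<bar> * \<bar>q w\<bar>"
      using adj_nonneg[of E u w] by (simp add: mult.assoc mult_left_mono abs_mult[symmetric])
  qed
  moreover have "qf V (adj E) (\<lambda>u. \<bar>q u\<bar>) \<le> L * nrm V (\<lambda>u. \<bar>q u\<bar>)" using m unfolding ismax_def by blast
  ultimately show ?thesis using m n unfolding ismax_def by auto
qed

lemma perron_pos: assumes m: "ismax V (adj E) L q" and u: "u \<in> V" shows "q u \<noteq> 0"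
proof
  assume q0: "q u = 0"
  define a where "a v = \<bar>q v\<bar>" for v
  have ma: "ismax V (adj E) L a" using abs_ismax[OF m] unfolding a_def .
  have ev: "\<forall>v\<in>V. mv V (adj E) a v = L * a v" by (rule ismax_eig[OF fin symm_adj ma])
  have "(u, v) \<in> {(x, y). {x, y} \<in> E}\<^sup>* \<Longrightarrow> a v = 0" for v
  proof (induction rule: rtrancl_induct)
    case base then show ?case using q0 unfolding a_def by simp
  next
    case (step y z)
    then have yz: "{y, z} \<in> E" by simp
    then have yV: "y \<in> V" "z \<in> V" using edge_in by auto
    have "a z = adj E y z * a z" using yz unfolding adj_def by simp
    also have "\<dots> \<le> mv V (adj E) a y" unfolding mv_def
      by (rule member_le_sum[OF yV(2) _ fin]) (simp add: a_def adj_nonneg)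
    also have "\<dots> = 0" using ev yV step.IH by simp
    finally show ?case unfolding a_def by simp
  qed
  then have "\<forall>v\<in>V. a v = 0" using conn u unfolding graph_connected_def by blast
  then have "nrm V a = 0" using nrm_zero_iff[OF fin] by blast
  then show False using ma unfolding ismax_def by simp
qed

lemma pos_of_eq:
  assumes y: "w \<in> V" "y w \<noteq> 0" and q: "qf V (adj E) y \<ge> rho * nrm V y" and u: "u \<in> V"
  shows "y u \<noteq> 0"
proof -
  have np: "nrm V y > 0" by (rule nrm_pos[where x=y, OF fin y])
  define k where "k = 1 / sqrt (nrm V y)"
  have ky: "k^2 * nrm V y = 1" unfolding k_def using np by (simp add: power_divide)
  have n1: "nrm V (\<lambda>u. k * y u) = 1" using nrm_scale[where V=V and k=k and x=y] ky by simp
  have "qf V (adj E) (\<lambda>u. k * y u) = k^2 * qf V (adj E) y" by (rule qf_scale)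
  moreover have "k^2 * qf V (adj E) y \<ge> k^2 * (rho * nrm V y)" using q by (simp add: mult_left_mono)
  moreover have "k^2 * (rho * nrm V y) = rho" using ky by (metis mult.commute mult.left_commute mult_1)
  moreover have "qf V (adj E) (\<lambda>u. k * y u) \<le> rho" using rho_bound[of "\<lambda>u. k * y u"] n1 by simp
  ultimately have "qf V (adj E) (\<lambda>u. k * y u) = rho" by linarith
  then have "ismax V (adj E) rho (\<lambda>u. k * y u)" unfolding ismax_def using n1 rho_bound by auto
  from perron_pos[OF this u] show ?thesis by simp
qed

end


lemma qf_mcong: "(\<And>u w. u \<in> W \<Longrightarrow> w \<in> W \<Longrightarrow> M u w = N u w) \<Longrightarrow> qf W M y = qf W N y"
  unfolding qf_def bf_def by (intro sum.cong refl) auto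

lemma reig_mcong: "(\<And>u w. u \<in> W \<Longrightarrow> w \<in> W \<Longrightarrow> M u w = N u w) \<Longrightarrow> reig W M \<mu> z \<Longrightarrow> reig W N \<mu> z"
  unfolding reig_def mv_def by auto

lemma sum_drop0: "finite V \<Longrightarrow> v \<in> V \<Longrightarrow> f v = 0 \<Longrightarrow> sum f V = sum f (V - {v})"
  by (simp add: sum.remove)

lemma qf_drop: assumes "finite V" "v \<in> V" "y v = 0" shows "qf V M y = qf (V - {v}) M y"
proof -
  have "qf V M y = (\<Sum>u\<in>V. \<Sum>w\<in>V. M u w * y u * y w)" unfolding qf_def bf_def ..
  also have "\<dots> = (\<Sum>u\<in>V - {v}. \<Sum>w\<in>V. M u w * y u * y w)"
    by (rule sum_drop0) (use assms in auto)
  also have "\<dots> = (\<Sum>u\<in>V - {v}. \<Sum>w\<in>V - {v}. M u w * y u * y w)"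
    by (intro sum.cong refl sum_drop0) (use assms in auto)
  finally show ?thesis unfolding qf_def bf_def .
qed

lemma nrm_drop: assumes "finite V" "v \<in> V" "y v = 0" shows "nrm V y = nrm (V - {v}) y"
  unfolding nrm_def ip_def by (rule sum_drop0) (use assms in auto)

lemma bf_scale: "bf V M (\<lambda>u. k * x u) y = k * bf V M x y"
  unfolding bf_def by (simp add: sum_distrib_left algebra_simps)
lemma ip_scale: "ip V (\<lambda>u. k * x u) y = k * ip V x y"
  unfolding ip_def by (simp add: sum_distrib_left algebra_simps)

lemma qf_reig: "reig V M \<mu> z \<Longrightarrow> qf V M z = \<mu> * nrm V z"
  unfolding qf_def bf_mv nrm_def ip_def reig_def by (simp add: sum_distrib_left algebra_simps)

context sgraph begin

definition Ev where "Ev v = {e\<in>E. v \<notin> e}"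

lemma adj_Ev: "u \<noteq> v \<Longrightarrow> w \<noteq> v \<Longrightarrow> adj (Ev v) u w = adj E u w"
  unfolding adj_def Ev_def by auto

lemma card2: "\<exists>a b. a \<in> V \<and> b \<in> V \<and> a \<noteq> b"
proof -
  obtain e where e: "e \<in> E" using ne by auto
  from edge[OF e] obtain u v where "u \<in> V" "v \<in> V" "u \<noteq> v" by blast
  then show ?thesis by blast
qed

lemma Wne: "V - {v} \<noteq> {}" using card2 by blast

lemma rhoV_ge: "v \<in> V \<Longrightarrow> graph_rho (V - {v}) (Ev v) \<le> rho_V V E"
  unfolding rho_V_def Ev_def by (rule Max_ge) (use fin in auto)

lemma rhoV_attained: "\<exists>v\<in>V. rho_V V E = graph_rho (V - {v}) (Ev v)"
proof -
  have "rho_V V E \<in> (\<lambda>v. graph_rho (V - {v}) (Ev v)) ` V"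
    unfolding rho_V_def Ev_def by (rule Max_in) (use fin Vne in auto)
  then show ?thesis by auto
qed

lemma sub_bound: assumes v: "v \<in> V" and y: "y v = 0"
  shows "qf V (adj E) y \<le> rho_V V E * nrm V y"
proof -
  have "qf V (adj E) y = qf (V - {v}) (adj E) y" by (rule qf_drop[where y=y, OF fin v y])
  also have "\<dots> = qf (V - {v}) (adj (Ev v)) y" by (rule qf_mcong) (simp add: adj_Ev)
  also have "\<dots> \<le> graph_rho (V - {v}) (Ev v) * nrm (V - {v}) y"
    unfolding graph_rho_def by (rule sr_rayleigh) (use fin Wne symm_adj in auto)
  also have "nrm (V - {v}) y = nrm V y" using nrm_drop[where y=y, OF fin v y] by simp
  also have "graph_rho (V - {v}) (Ev v) * nrm V y \<le> rho_V V E * nrm V y"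
    by (rule mult_right_mono[OF rhoV_ge[OF v] nrm_nonneg])
  finally show ?thesis .
qed

lemma rhoGv_lt: assumes v: "v \<in> V" shows "graph_rho (V - {v}) (Ev v) < rho"
proof -
  let ?W = "V - {v}"
  obtain \<mu> z where z: "reig ?W (adj (Ev v)) \<mu> z" "\<bar>\<mu>\<bar> = graph_rho ?W (Ev v)"
    using sr_attained[OF finite_Diff[OF fin] Wne symm_adj] unfolding graph_rho_def by blast
  define y where "y u = (if u \<in> ?W then \<bar>z u\<bar> else 0)" for u
  have yv: "y v = 0" unfolding y_def by simp
  have "\<bar>\<mu>\<bar> * nrm ?W z \<le> qf ?W (adj (Ev v)) (\<lambda>u. \<bar>z u\<bar>)"
    by (rule triangle[OF z(1)]) (simp add: adj_nonneg)
  also have "\<dots> = qf ?W (adj (Ev v)) y" by (rule qf_cong) (simp add: y_def)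
  also have "\<dots> = qf ?W (adj E) y" by (rule qf_mcong) (simp add: adj_Ev)
  also have "\<dots> = qf V (adj E) y" by (rule qf_drop[where y=y, OF fin v yv, symmetric])
  finally have a: "\<bar>\<mu>\<bar> * nrm ?W z \<le> qf V (adj E) y" .
  have nz: "nrm V y = nrm ?W z"
  proof -
    have "nrm V y = nrm ?W y" by (rule nrm_drop[where y=y, OF fin v yv])
    also have "\<dots> = nrm ?W z" unfolding nrm_def ip_def by (intro sum.cong refl) (simp add: y_def abs_mult_self_eq)
    finally show ?thesis .
  qed
  obtain w where w: "w \<in> ?W" "z w \<noteq> 0" using z(1) unfolding reig_def by auto
  show ?thesis
  proof (rule ccontr)
    assume "\<not> graph_rho ?W (Ev v) < rho"
    then have "rho \<le> \<bar>\<mu>\<bar>" using z(2) by simp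
    then have "rho * nrm V y \<le> \<bar>\<mu>\<bar> * nrm ?W z" using nz nrm_nonneg by (metis mult_right_mono)
    with a have "qf V (adj E) y \<ge> rho * nrm V y" by linarith
    moreover have "w \<in> V" "y w \<noteq> 0" using w unfolding y_def by auto
    ultimately have "y v \<noteq> 0" using pos_of_eq v by blast
    then show False using yv by simp
  qed
qed

lemma rhoV_lt: "rho_V V E < rho"
  using rhoV_attained rhoGv_lt by auto

lemma rhoV_nonneg: "rho_V V E \<ge> 0"
proof -
  obtain v where v: "v \<in> V" using Vne by auto
  obtain \<mu> z where z: "reig (V - {v}) (adj (Ev v)) \<mu> z" "\<bar>\<mu>\<bar> = graph_rho (V - {v}) (Ev v)"
    using sr_attained[OF finite_Diff[OF fin] Wne symm_adj] unfolding graph_rho_def by blast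
  then show ?thesis using rhoV_ge[OF v] by linarith
qed

lemma interlace:
  assumes z: "reig V (adj E) \<nu> z" and nr: "\<nu> \<noteq> rho"
  shows "\<nu> \<le> rho_V V E"
proof -
  obtain p where p: "ismax V (adj E) rho p" using rho_ismax unfolding rho_def by blast
  have pe: "\<forall>u\<in>V. mv V (adj E) p u = rho * p u" by (rule ismax_eig[OF fin symm_adj p])
  have np: "nrm V p = 1" and qp: "qf V (adj E) p = rho" using p unfolding ismax_def by auto
  have b1: "bf V (adj E) z p = rho * ip V z p"
    unfolding bf_mv ip_def using pe by (simp add: sum_distrib_left algebra_simps)
  have b2: "bf V (adj E) p z = \<nu> * ip V z p"
    unfolding bf_mv ip_def using z unfolding reig_def by (simp add: sum_distrib_left algebra_simps)
  have "rho * ip V z p = \<nu> * ip V z p" using b1 b2 bf_sym[OF symm_adj[of V E], of z p] by linarith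
  then have ip0: "ip V z p = 0" using nr by (metis mult_right_cancel)
  have bzp: "bf V (adj E) z p = 0" using b1 ip0 by simp
  obtain v where v: "v \<in> V" using Vne by auto
  have pv: "p v \<noteq> 0" by (rule perron_pos[OF p v])
  define w where "w u = p v * z u + (- z v) * p u" for u
  have wv: "w v = 0" unfolding w_def by simp
  have qz: "qf V (adj E) z = \<nu> * nrm V z" by (rule qf_reig[OF z])
  have qw: "qf V (adj E) w = (p v)^2 * (\<nu> * nrm V z) + (z v)^2 * rho"
    unfolding w_def qf_expand[OF symm_adj] qf_scale bf_scale bzp qz qp by (simp add: power2_eq_square)
  have nw: "nrm V w = (p v)^2 * nrm V z + (z v)^2"
    unfolding w_def nrm_expand nrm_scale ip_scale ip0 np by (simp add: power2_eq_square)
  have nule: "\<nu> \<le> rho" using eig_bound[OF z] by (simp add: adj_nonneg)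
  have "\<nu> * nrm V w \<le> qf V (adj E) w"
  proof -
    have "\<nu> * (z v)^2 \<le> rho * (z v)^2" using nule by (simp add: mult_right_mono)
    then show ?thesis unfolding qw nw by (simp add: algebra_simps)
  qed
  also have "\<dots> \<le> rho_V V E * nrm V w" by (rule sub_bound[where y=w, OF v wv])
  finally have le: "\<nu> * nrm V w \<le> rho_V V E * nrm V w" .
  have "nrm V w > 0"
  proof (rule ccontr)
    assume "\<not> nrm V w > 0"
    then have "nrm V w = 0" using nrm_nonneg[of V w] by simp
    then have w0: "\<forall>u\<in>V. w u = 0" using nrm_zero_iff[OF fin] by blast
    have zp: "z u = (z v / p v) * p u" if "u \<in> V" for u
      using w0 that pv unfolding w_def by (simp add: field_simps)
    have "ip V z p = (z v / p v) * nrm V p"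
      unfolding nrm_def ip_def by (simp add: sum_distrib_left zp algebra_simps cong: sum.cong)
    then have "z v = 0" using ip0 np pv by simp
    then have "\<forall>u\<in>V. z u = 0" using zp by simp
    then show False using z unfolding reig_def by blast
  qed
  then show ?thesis using le by simp
qed

definition sgnv :: "('a \<Rightarrow> real) \<Rightarrow> 'a \<Rightarrow> real" where
  "sgnv z = restrict (\<lambda>u. sgn (z u)) V"

lemma aux4: "(x::real) = s * a \<Longrightarrow> y = t * b \<Longrightarrow> c * x * y = c * (s * t) * (a * b)"
  by simp

lemma dsum0:
  fixes f :: "'b \<Rightarrow> 'b \<Rightarrow> real"
  assumes "finite W" "\<And>u w. f u w \<ge> 0" "(\<Sum>u\<in>W. \<Sum>w\<in>W. f u w) = 0"
  shows "\<forall>u\<in>W. \<forall>w\<in>W. f u w = 0"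
proof -
  have "\<forall>u\<in>W. (\<Sum>w\<in>W. f u w) = 0"
    using assms(3) sum_nonneg_eq_0_iff[OF assms(1), of "\<lambda>u. \<Sum>w\<in>W. f u w"] assms(2)
    by (simp add: sum_nonneg)
  show ?thesis
  proof (intro ballI)
    fix u w assume u: "u \<in> W" and w: "w \<in> W"
    have "sum (f u) W = 0" using \<open>\<forall>u\<in>W. (\<Sum>w\<in>W. f u w) = 0\<close> u by simp
    then have "\<forall>x\<in>W. f u x = 0" using sum_nonneg_eq_0_iff[OF assms(1), of "f u"] assms(2) by simp
    then show "f u w = 0" using w by simp
  qed
qed

lemma sign_eq:
  assumes c: "\<forall>e\<in>E. c e = 1 \<or> c e = -1" and z: "reig V (signed_adj E c) \<mu> z" and m: "\<bar>\<mu>\<bar> = rho"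
  shows "(\<forall>u\<in>V. z u \<noteq> 0) \<and>
    ((\<mu> = rho \<and> (\<forall>e\<in>E. c e = (\<Prod>w\<in>e. sgnv z w))) \<or> (\<mu> = - rho \<and> (\<forall>e\<in>E. c e = - (\<Prod>w\<in>e. sgnv z w))))"
proof -
  let ?A = "adj E" and ?B = "signed_adj E c"
  let ?a = "\<lambda>u. \<bar>z u\<bar>"
  have qB: "qf V ?B z = \<mu> * nrm V z" by (rule qf_reig[OF z])
  have na: "nrm V ?a = nrm V z" unfolding nrm_def ip_def by (simp add: abs_mult_self_eq)
  have trm: "\<bar>?B u w * z u * z w\<bar> = ?A u w * ?a u * ?a w" for u w
    using c unfolding signed_adj_def adj_def by (auto simp: abs_mult)
  have tri: "\<bar>qf V ?B z\<bar> \<le> qf V ?A ?a"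
  proof -
    have "\<bar>qf V ?B z\<bar> \<le> (\<Sum>u\<in>V. \<bar>\<Sum>w\<in>V. ?B u w * z u * z w\<bar>)" unfolding qf_def bf_def by (rule sum_abs)
    also have "\<dots> \<le> (\<Sum>u\<in>V. \<Sum>w\<in>V. \<bar>?B u w * z u * z w\<bar>)" by (intro sum_mono sum_abs)
    also have "\<dots> = qf V ?A ?a" unfolding qf_def bf_def trm ..
    finally show ?thesis .
  qed
  have "qf V ?A ?a \<le> rho * nrm V ?a" by (rule rho_bound)
  then have eqa: "qf V ?A ?a = rho * nrm V z" using tri qB m na nrm_nonneg[of V z] by (simp add: abs_mult)
  obtain w where w: "w \<in> V" "z w \<noteq> 0" using z unfolding reig_def by auto
  have nz: "\<forall>u\<in>V. z u \<noteq> 0"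
  proof
    fix u assume u: "u \<in> V"
    have "?a u \<noteq> 0" by (rule pos_of_eq[of w]) (use w eqa na u in auto)
    then show "z u \<noteq> 0" by simp
  qed
  have sz: "z u = sgnv z u * ?a u" if "u \<in> V" for u
    unfolding sgnv_def using that by (simp add: sgn_mult_abs)
  have pe: "(\<Prod>x\<in>e. sgnv z x) = sgnv z u * sgnv z v" if "e = {u, v}" "u \<noteq> v" for e u v
    using that by simp
  have s2: "sgnv z u * sgnv z u = 1" if "u \<in> V" for u
    using nz that unfolding sgnv_def by (auto simp: sgn_if)
  show ?thesis
  proof (cases "\<mu> \<ge> 0")
    case True
    then have mu: "\<mu> = rho" using m by simp
    have "(\<Sum>u\<in>V. \<Sum>w\<in>V. ?A u w * ?a u * ?a w - ?B u w * z u * z w) = 0"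
      using eqa qB mu unfolding qf_def bf_def by (simp add: sum_subtractf)
    moreover have nn: "\<And>u w. ?A u w * ?a u * ?a w - ?B u w * z u * z w \<ge> 0"
      using trm abs_ge_self by (metis diff_ge_0_iff_ge)
    ultimately have t0: "\<forall>u\<in>V. \<forall>w\<in>V. ?A u w * ?a u * ?a w - ?B u w * z u * z w = 0"
      by (intro dsum0[OF fin]) auto
    have "\<forall>e\<in>E. c e = (\<Prod>x\<in>e. sgnv z x)"
    proof
      fix e assume e: "e \<in> E"
      then obtain u v where uv: "u \<in> V" "v \<in> V" "u \<noteq> v" "e = {u, v}" using edge by blast
      have "?A u v * ?a u * ?a v - ?B u v * z u * z v = 0" using t0 uv(1,2) by blast
      moreover have "?A u v = 1" "?B u v = c e" using e uv(4) unfolding adj_def signed_adj_def by auto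
      ultimately have "?a u * ?a v - c e * z u * z v = 0" by simp
      moreover have "c e * z u * z v = c e * (sgnv z u * sgnv z v) * (?a u * ?a v)"
        by (rule aux4[OF sz[OF uv(1)] sz[OF uv(2)]])
      ultimately have "?a u * ?a v = c e * (sgnv z u * sgnv z v) * (?a u * ?a v)"
        by linarith
      moreover have "?a u * ?a v \<noteq> 0" using nz uv by simp
      ultimately have "c e * (sgnv z u * sgnv z v) = 1" by simp
      then have "c e = sgnv z u * sgnv z v"
        using s2[OF uv(1)] s2[OF uv(2)] c e
        by (metis (no_types, opaque_lifting) mult.assoc mult.commute mult_1 mult_cancel_left1)
      then show "c e = (\<Prod>x\<in>e. sgnv z x)" using pe uv by simp
    qed
    then show ?thesis using nz mu by simp
  next
    case False
    then have mu: "\<mu> = - rho" using m by simp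
    have "(\<Sum>u\<in>V. \<Sum>w\<in>V. ?A u w * ?a u * ?a w + ?B u w * z u * z w) = 0"
      using eqa qB mu unfolding qf_def bf_def by (simp add: sum.distrib)
    moreover have nn: "\<And>u w. ?A u w * ?a u * ?a w + ?B u w * z u * z w \<ge> 0"
      using trm abs_ge_minus_self by (metis add.commute le_add_same_cancel1 add_le_cancel_left neg_le_iff_le diff_ge_0_iff_ge diff_minus_eq_add)
    ultimately have t0: "\<forall>u\<in>V. \<forall>w\<in>V. ?A u w * ?a u * ?a w + ?B u w * z u * z w = 0"
      by (intro dsum0[OF fin]) auto
    have "\<forall>e\<in>E. c e = - (\<Prod>x\<in>e. sgnv z x)"
    proof
      fix e assume e: "e \<in> E"
      then obtain u v where uv: "u \<in> V" "v \<in> V" "u \<noteq> v" "e = {u, v}" using edge by blast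
      have "?A u v * ?a u * ?a v + ?B u v * z u * z v = 0" using t0 uv(1,2) by blast
      moreover have "?A u v = 1" "?B u v = c e" using e uv(4) unfolding adj_def signed_adj_def by auto
      ultimately have "?a u * ?a v + c e * z u * z v = 0" by simp
      moreover have "c e * z u * z v = c e * (sgnv z u * sgnv z v) * (?a u * ?a v)"
        by (rule aux4[OF sz[OF uv(1)] sz[OF uv(2)]])
      ultimately have "?a u * ?a v = - c e * (sgnv z u * sgnv z v) * (?a u * ?a v)"
        by linarith
      moreover have "?a u * ?a v \<noteq> 0" using nz uv by simp
      ultimately have "- c e * (sgnv z u * sgnv z v) = 1"
        by (metis mult_cancel_right2 mult.commute)
      then have "c e = - (sgnv z u * sgnv z v)"
        using s2[OF uv(1)] s2[OF uv(2)] c e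
        by (metis (no_types, opaque_lifting) mult.assoc mult.commute mult_1 mult_cancel_left1 mult_minus_left minus_minus)
      then show "c e = - (\<Prod>x\<in>e. sgnv z x)" using pe uv by simp
    qed
    then show ?thesis using nz mu by simp
  qed
qed

lemma switch:
  assumes s: "\<forall>u\<in>V. s u = 1 \<or> s u = -1" and sig: "\<sigma> = 1 \<or> \<sigma> = -1"
    and c: "\<forall>e\<in>E. c e = \<sigma> * (\<Prod>w\<in>e. s w)" and z: "reig V (signed_adj E c) \<mu> z"
  shows "reig V (adj E) (\<sigma> * \<mu>) (\<lambda>u. s u * z u)"
proof -
  have B: "signed_adj E c u w = \<sigma> * s u * s w * adj E u w" if "u \<in> V" "w \<in> V" for u w
  proof (cases "{u, w} \<in> E")
    case True
    then have "u \<noteq> w" using edge_in by blast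
    then show ?thesis using True c unfolding signed_adj_def adj_def by (simp add: mult.assoc)
  qed (simp add: signed_adj_def adj_def)
  have ss: "s u * s u = 1" if "u \<in> V" for u using s that by auto
  have "\<forall>u\<in>V. mv V (adj E) (\<lambda>u. s u * z u) u = \<sigma> * \<mu> * (s u * z u)"
  proof
    fix u assume u: "u \<in> V"
    have "s u * mv V (signed_adj E c) z u = \<sigma> * (s u * s u) * mv V (adj E) (\<lambda>u. s u * z u) u"
      unfolding mv_def using B u by (simp add: sum_distrib_left algebra_simps)
    then have "s u * (\<mu> * z u) = \<sigma> * mv V (adj E) (\<lambda>u. s u * z u) u"
      using z u ss[OF u] unfolding reig_def by simp
    then have "\<sigma> * (s u * (\<mu> * z u)) = (\<sigma> * \<sigma>) * mv V (adj E) (\<lambda>u. s u * z u) u" by (simp add: algebra_simps)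
    then show "mv V (adj E) (\<lambda>u. s u * z u) u = \<sigma> * \<mu> * (s u * z u)" using sig by (auto simp: algebra_simps)
  qed
  moreover have "\<exists>u\<in>V. s u * z u \<noteq> 0" using z s unfolding reig_def by force
  ultimately show ?thesis unfolding reig_def by simp
qed

end


context sgraph begin

definition Sw :: "('a \<Rightarrow> real) set" where "Sw = PiE V (\<lambda>_. {-1, 1})"
definition Sig :: "('a set \<Rightarrow> real) set" where "Sig = PiE E (\<lambda>_. {-1, 1})"
definition phi :: "('a \<Rightarrow> real) \<Rightarrow> 'a set \<Rightarrow> real" where "phi s = restrict (\<lambda>e. \<Prod>w\<in>e. s w) E"
definition negs :: "('a set \<Rightarrow> real) \<Rightarrow> 'a set \<Rightarrow> real" where "negs c = restrict (\<lambda>e. - c e) E"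

lemma finE: "finite E"
proof -
  have "E \<subseteq> Pow V" using edge by blast
  then show ?thesis using fin by (meson finite_Pow_iff finite_subset)
qed

lemma prod_edge: "{u, v} \<in> E \<Longrightarrow> (\<Prod>w\<in>{u,v}. s w) = s u * s v"
  using edge_in by auto

lemma sw_val: "s \<in> Sw \<Longrightarrow> u \<in> V \<Longrightarrow> s u = 1 \<or> s u = -1"
  unfolding Sw_def using PiE_mem[of s V "\<lambda>_. {-1,1}" u] by auto

lemma edge_prod: assumes "{u, v} \<in> E" "\<forall>e\<in>E. (\<Prod>w\<in>e. s w) = k" shows "s u * s v = k"
proof -
  have "(\<Prod>w\<in>{u,v}. s w) = k" using assms by blast
  then show ?thesis by (metis prod_edge[OF assms(1)])
qed

lemma phi_in: "s \<in> Sw \<Longrightarrow> phi s \<in> Sig"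
proof -
  assume s: "s \<in> Sw"
  have "(\<Prod>w\<in>e. s w) \<in> {-1, 1}" if e: "e \<in> E" for e
  proof -
    obtain u v where uv: "u \<in> V" "v \<in> V" "u \<noteq> v" "e = {u, v}" using edge[OF e] by blast
    have "s u \<in> {-1,1}" "s v \<in> {-1,1}" using s uv unfolding Sw_def by auto
    then show ?thesis using uv by auto
  qed
  then show ?thesis unfolding phi_def Sig_def by auto
qed

lemma card_Sig: "card Sig = 2 ^ card E"
  unfolding Sig_def using finE by (simp add: card_PiE numeral_2_eq_2)

lemma phi_eq_same:
  assumes s: "s \<in> Sw" and s': "s' \<in> Sw" and p: "phi s = phi s'" and v0: "v0 \<in> V" "s v0 = s' v0"
  shows "s = s'"
proof -
  have "(v0, v) \<in> {(x, y). {x, y} \<in> E}\<^sup>* \<Longrightarrow> s v = s' v" for v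
  proof (induction rule: rtrancl_induct)
    case base then show ?case using v0 by simp
  next
    case (step y z)
    then have yz: "{y, z} \<in> E" by simp
    then have yV: "y \<in> V" "z \<in> V" using edge_in by auto
    have "phi s {y, z} = phi s' {y, z}" using p by simp
    then have "s y * s z = s' y * s' z" using yz prod_edge[OF yz, of s] prod_edge[OF yz, of s'] unfolding phi_def by simp
    moreover have "s y \<noteq> 0" using sw_val[OF s yV(1)] by auto
    ultimately show ?case using step.IH by simp
  qed
  then have "\<forall>v\<in>V. s v = s' v" using conn v0 unfolding graph_connected_def by blast
  then show ?thesis using s s' unfolding Sw_def by (auto intro: PiE_ext)
qed

lemma card_phi: "card (phi ` Sw) = 2 ^ (card V - 1)"
proof -
  obtain v0 where v0: "v0 \<in> V" using Vne by auto
  define Sw1 where "Sw1 = PiE V (\<lambda>u. if u = v0 then {1} else {-1, 1::real})"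
  have sub: "Sw1 \<subseteq> Sw" unfolding Sw1_def Sw_def by (auto simp: PiE_def Pi_def split: if_splits)
  have img: "phi ` Sw = phi ` Sw1"
  proof
    show "phi ` Sw1 \<subseteq> phi ` Sw" using sub by auto
    show "phi ` Sw \<subseteq> phi ` Sw1"
    proof
      fix c assume "c \<in> phi ` Sw"
      then obtain s where s: "s \<in> Sw" "c = phi s" by auto
      show "c \<in> phi ` Sw1"
      proof (cases "s v0 = 1")
        case True
        then have "s \<in> Sw1" using s unfolding Sw1_def Sw_def by (auto simp: PiE_def Pi_def)
        then show ?thesis using s by auto
      next
        case False
        define t where "t = restrict (\<lambda>u. - s u) V"
        have "s v0 = -1" using False s v0 unfolding Sw_def by auto
        then have "t \<in> Sw1" using s v0 unfolding Sw1_def Sw_def t_def by (auto simp: PiE_def Pi_def)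
        moreover have "phi t = phi s"
        proof
          fix e show "phi t e = phi s e"
          proof (cases "e \<in> E")
            case True
            then obtain u v where uv: "u \<in> V" "v \<in> V" "u \<noteq> v" "e = {u, v}" using edge by blast
            then show ?thesis unfolding phi_def t_def by simp
          qed (simp add: phi_def)
        qed
        ultimately show ?thesis using s by (metis image_eqI)
      qed
    qed
  qed
  have inj: "inj_on phi Sw1"
  proof (rule inj_onI)
    fix s s' assume "s \<in> Sw1" "s' \<in> Sw1" "phi s = phi s'"
    moreover have "s v0 = 1" "s' v0 = 1" using PiE_mem[OF \<open>s \<in> Sw1\<close>[unfolded Sw1_def] v0]
      PiE_mem[OF \<open>s' \<in> Sw1\<close>[unfolded Sw1_def] v0] by auto
    ultimately show "s = s'" using phi_eq_same[of s s' v0] sub v0 by auto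
  qed
  have "card Sw1 = (\<Prod>u\<in>V. card (if u = v0 then {1} else {-1, 1::real}))"
    unfolding Sw1_def by (rule card_PiE[OF fin])
  also have "\<dots> = (\<Prod>u\<in>V. if u = v0 then 1 else 2)" by (intro prod.cong refl) auto
  also have "\<dots> = (if v0 = v0 then 1 else 2) * (\<Prod>u\<in>V - {v0}. if u = v0 then 1 else (2::nat))"
    by (rule prod.remove[OF fin v0])
  also have "(\<Prod>u\<in>V - {v0}. if u = v0 then 1 else (2::nat)) = (\<Prod>u\<in>V - {v0}. 2)"
    by (rule prod.cong) auto
  also have "(if v0 = v0 then 1 else 2) * (\<Prod>u\<in>V - {v0}. (2::nat)) = 2 ^ (card V - 1)"
    using fin v0 by (simp add: card_Diff_singleton)
  finally show ?thesis using img card_image[OF inj] by simp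
qed

lemma phi_sub: "phi ` Sw \<subseteq> Sig" using phi_in by auto

lemma finSig: "finite Sig" unfolding Sig_def using finE by (simp add: finite_PiE)

lemma E_ge: "card V \<le> card E + 1"
proof -
  have "card (phi ` Sw) \<le> card Sig" by (rule card_mono[OF finSig phi_sub])
  then have "(2::nat) ^ (card V - 1) \<le> 2 ^ card E" using card_phi card_Sig by simp
  then have "card V - 1 \<le> card E" by simp
  then show ?thesis by simp
qed

lemma sw_mult: assumes "s \<in> Sw" "s' \<in> Sw" shows "restrict (\<lambda>u. s u * s' u) V \<in> Sw"
proof -
  have "s u * s' u \<in> {-1,1}" if "u \<in> V" for u
  proof -
    have "s u \<in> {-1,1}" "s' u \<in> {-1,1}" using assms that by (auto simp: Sw_def PiE_iff)
    then show ?thesis by auto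
  qed
  then show ?thesis unfolding Sw_def by auto
qed

lemma bip_iff: "is_bipartite V E \<longleftrightarrow> (\<exists>s\<in>Sw. \<forall>e\<in>E. (\<Prod>w\<in>e. s w) = -1)"
proof
  assume "is_bipartite V E"
  then obtain A where A: "A \<subseteq> V" "\<forall>e\<in>E. card (e \<inter> A) = 1" unfolding is_bipartite_def by blast
  define s where "s = restrict (\<lambda>u. if u \<in> A then -1 else (1::real)) V"
  have "s \<in> Sw" unfolding s_def Sw_def by auto
  moreover have "\<forall>e\<in>E. (\<Prod>w\<in>e. s w) = -1"
  proof
    fix e assume e: "e \<in> E"
    then obtain u v where uv: "u \<in> V" "v \<in> V" "u \<noteq> v" "e = {u, v}" using edge by blast
    have "card ({u, v} \<inter> A) = 1" using A e uv by simp
    then have "(u \<in> A \<and> v \<notin> A) \<or> (u \<notin> A \<and> v \<in> A)" using uv(3)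
      by (cases "u \<in> A"; cases "v \<in> A") (auto simp: Int_insert_left)
    then show "(\<Prod>w\<in>e. s w) = -1" using uv unfolding s_def by auto
  qed
  ultimately show "\<exists>s\<in>Sw. \<forall>e\<in>E. (\<Prod>w\<in>e. s w) = -1" by blast
next
  assume "\<exists>s\<in>Sw. \<forall>e\<in>E. (\<Prod>w\<in>e. s w) = -1"
  then obtain s where s: "s \<in> Sw" "\<forall>e\<in>E. (\<Prod>w\<in>e. s w) = -1" by blast
  define A where "A = {u\<in>V. s u = -1}"
  have "\<forall>e\<in>E. card (e \<inter> A) = 1"
  proof
    fix e assume e: "e \<in> E"
    then obtain u v where uv: "u \<in> V" "v \<in> V" "u \<noteq> v" "e = {u, v}" using edge by blast
    have "s u * s v = -1" using edge_prod[of u v s] s(2) e uv by simp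
    moreover have "s u = 1 \<or> s u = -1" "s v = 1 \<or> s v = -1" using sw_val[OF s(1)] uv by auto
    ultimately have "(s u = -1 \<and> s v = 1) \<or> (s u = 1 \<and> s v = -1)" by auto
    then show "card (e \<inter> A) = 1" using uv unfolding A_def by (auto simp: Int_insert_left)
  qed
  moreover have "A \<subseteq> V" unfolding A_def by auto
  ultimately show "is_bipartite V E" unfolding is_bipartite_def by blast
qed

lemma negs_in: "c \<in> Sig \<Longrightarrow> negs c \<in> Sig"
  unfolding negs_def Sig_def by auto

lemma negs_inj: "inj_on negs Sig"
proof (rule inj_onI)
  fix c d assume cd: "c \<in> Sig" "d \<in> Sig" "negs c = negs d"
  show "c = d"
  proof (rule PiE_ext[of c E "\<lambda>_. {-1,1}"])
    show "c \<in> PiE E (\<lambda>_. {-1,1})" "d \<in> PiE E (\<lambda>_. {-1,1})" using cd unfolding Sig_def by auto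
    fix e assume "e \<in> E"
    then show "c e = d e" using fun_cong[OF cd(3), of e] unfolding negs_def by simp
  qed
qed

lemma card_negs: "card (negs ` phi ` Sw) = 2 ^ (card V - 1)"
  using card_image[OF inj_on_subset[OF negs_inj phi_sub]] card_phi by simp

lemma bip_negs: assumes "is_bipartite V E" shows "negs ` phi ` Sw \<subseteq> phi ` Sw"
proof
  fix c assume "c \<in> negs ` phi ` Sw"
  then obtain s where s: "s \<in> Sw" "c = negs (phi s)" by auto
  obtain s0 where s0: "s0 \<in> Sw" "\<forall>e\<in>E. (\<Prod>w\<in>e. s0 w) = -1" using assms bip_iff by blast
  define t where "t = restrict (\<lambda>u. s u * s0 u) V"
  have "t \<in> Sw" using sw_mult[OF s(1) s0(1)] unfolding t_def .
  moreover have "phi t = c"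
  proof
    fix e show "phi t e = c e"
    proof (cases "e \<in> E")
      case True
      then obtain u v where uv: "u \<in> V" "v \<in> V" "u \<noteq> v" "e = {u, v}" using edge by blast
      have "s0 u * s0 v = -1" using edge_prod[of u v s0] s0(2) True uv by simp
      have "phi t e = (s u * s0 u) * (s v * s0 v)" using True uv unfolding phi_def t_def by simp
      also have "\<dots> = (s u * s v) * (s0 u * s0 v)" by (simp add: algebra_simps)
      also have "\<dots> = - (s u * s v)" using \<open>s0 u * s0 v = -1\<close> by simp
      also have "\<dots> = c e" using True uv unfolding s(2) negs_def phi_def by simp
      finally show ?thesis .
    qed (simp add: phi_def s(2) negs_def)
  qed
  ultimately show "c \<in> phi ` Sw" by blast
qed

lemma nonbip_disj: assumes "\<not> is_bipartite V E" shows "negs ` phi ` Sw \<inter> phi ` Sw = {}"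
proof (rule ccontr)
  assume "negs ` phi ` Sw \<inter> phi ` Sw \<noteq> {}"
  then obtain s s' where s: "s \<in> Sw" "s' \<in> Sw" "negs (phi s) = phi s'" by auto
  define t where "t = restrict (\<lambda>u. s u * s' u) V"
  have "t \<in> Sw" using sw_mult[OF s(1) s(2)] unfolding t_def .
  moreover have "\<forall>e\<in>E. (\<Prod>w\<in>e. t w) = -1"
  proof
    fix e assume e: "e \<in> E"
    then obtain u v where uv: "u \<in> V" "v \<in> V" "u \<noteq> v" "e = {u, v}" using edge by blast
    have "- (s u * s v) = s' u * s' v" using fun_cong[OF s(3), of e] e uv unfolding negs_def phi_def by simp
    moreover have sq: "(s u * s v)^2 = 1" using sw_val[OF s(1) uv(1)] sw_val[OF s(1) uv(2)] by auto
    ultimately have h: "s' u * s' v = - (s u * s v)" by simp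
    have "s u * s' u * (s v * s' v) = (s u * s v) * (s' u * s' v)" by (simp add: algebra_simps)
    also have "\<dots> = - ((s u * s v)^2)" unfolding h by (simp add: power2_eq_square)
    finally have "s u * s' u * (s v * s' v) = -1" using sq by simp
    then show "(\<Prod>w\<in>e. t w) = -1" using uv unfolding t_def by simp
  qed
  ultimately show False using assms bip_iff by blast
qed

lemma tree_all: assumes "is_tree V E" shows "phi ` Sw = Sig"
proof (rule card_subset_eq[OF finSig phi_sub])
  have "card V - 1 = card E" using assms unfolding is_tree_def by linarith
  then show "card (phi ` Sw) = card Sig" using card_phi card_Sig by simp
qed

lemma tree_bip: assumes "is_tree V E" shows "is_bipartite V E"
proof -
  have "restrict (\<lambda>_. -1) E \<in> Sig" unfolding Sig_def by auto
  then have "restrict (\<lambda>_. -1) E \<in> phi ` Sw" using tree_all[OF assms] by simp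
  then obtain s where s: "s \<in> Sw" "phi s = restrict (\<lambda>_. -1) E" by (metis imageE)
  have "\<forall>e\<in>E. (\<Prod>w\<in>e. s w) = -1"
  proof
    fix e assume e: "e \<in> E"
    from fun_cong[OF s(2), of e] show "(\<Prod>w\<in>e. s w) = -1" using e unfolding phi_def by simp
  qed
  then show ?thesis using bip_iff s(1) by blast
qed

lemma negs_sub: "negs ` phi ` Sw \<subseteq> Sig" using negs_in phi_sub by auto

lemma uni_all: assumes "is_unicyclic V E" "\<not> is_bipartite V E"
  shows "phi ` Sw \<union> negs ` phi ` Sw = Sig"
proof (rule card_subset_eq[OF finSig])
  show "phi ` Sw \<union> negs ` phi ` Sw \<subseteq> Sig" using phi_sub negs_sub by auto
  have "card V \<noteq> 0" using card_0_eq[OF fin] Vne by simp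
  then have cV: "card V \<ge> 1" by linarith
  have "card (phi ` Sw \<union> negs ` phi ` Sw) = card (phi ` Sw) + card (negs ` phi ` Sw)"
    by (rule card_Un_disjoint) (use nonbip_disj[OF assms(2)] finite_subset[OF phi_sub finSig]
        finite_subset[OF negs_sub finSig] in auto)
  also have "\<dots> = 2 ^ card V" using card_phi card_negs cV by (cases "card V") auto
  also have "\<dots> = card Sig" using assms(1) card_Sig unfolding is_unicyclic_def by simp
  finally show "card (phi ` Sw \<union> negs ` phi ` Sw) = card Sig" .
qed

lemma exists_bad:
  assumes "\<not> is_tree V E" "\<not> (is_unicyclic V E \<and> \<not> is_bipartite V E)"
  shows "\<exists>c\<in>Sig. c \<notin> phi ` Sw \<union> negs ` phi ` Sw"
proof (rule ccontr)
  assume "\<not> ?thesis"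
  then have "Sig \<subseteq> phi ` Sw \<union> negs ` phi ` Sw" by auto
  then have le: "card Sig \<le> card (phi ` Sw \<union> negs ` phi ` Sw)"
    by (rule card_mono[rotated]) (use finite_subset[OF phi_sub finSig] finite_subset[OF negs_sub finSig] in auto)
  have ge: "card E \<ge> card V" using E_ge assms(1) conn unfolding is_tree_def by auto
  show False
  proof (cases "is_bipartite V E")
    case True
    then have "phi ` Sw \<union> negs ` phi ` Sw = phi ` Sw" using bip_negs by auto
    then have "(2::nat) ^ card E \<le> 2 ^ (card V - 1)" using le card_phi card_Sig by simp
    then have "card E \<le> card V - 1" by simp
    moreover have "card V > 0" using fin Vne by (simp add: card_gt_0_iff)
    ultimately show False using ge by linarith
  next
    case False
    then have "card E \<noteq> card V" using assms(2) conn unfolding is_unicyclic_def by auto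
    then have ge2: "card E \<ge> card V + 1" using ge by simp
    have "card (phi ` Sw \<union> negs ` phi ` Sw) \<le> card (phi ` Sw) + card (negs ` phi ` Sw)" by (rule card_Un_le)
    then have "(2::nat) ^ card E \<le> 2 ^ (card V - 1) + 2 ^ (card V - 1)" using le card_phi card_negs card_Sig by simp
    also have "\<dots> \<le> 2 ^ card V" using card_0_eq[OF fin] Vne by (cases "card V") auto
    finally have "card E \<le> card V" by simp
    then show False using ge2 by simp
  qed
qed

end


definition subs :: "'a set set \<Rightarrow> 'a set \<Rightarrow> ('a set \<Rightarrow> real) \<Rightarrow> 'a \<Rightarrow> 'a \<Rightarrow> real" where
  "subs E S c u v = (if u \<in> S \<and> v \<in> S then signed_adj E c u v else 0)"

lemma symm_subs: "symm V (subs E S c)"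
  unfolding symm_def subs_def using signed_adj_sym by metis

definition Hd :: "'a set \<Rightarrow> ('a + 'a set) set" where "Hd e = insert (Inr e) (Inl ` e)"

lemma p3e: "power3_edges E = Hd ` E" unfolding power3_edges_def Hd_def ..

context sgraph begin

lemma hsum_Inl:
  fixes X :: "'a + 'a set \<Rightarrow> 'r::comm_ring_1"
  assumes u: "u \<in> V"
  shows "(\<Sum>h\<in>{h\<in>power3_edges E. Inl u \<in> h}. \<Prod>j\<in>h - {Inl u}. X j)
       = (\<Sum>v\<in>{v\<in>V. {u,v}\<in>E}. X (Inr {u,v}) * X (Inl v))"
proof -
  have set: "{h\<in>power3_edges E. Inl u \<in> h} = (\<lambda>v. Hd {u,v}) ` {v\<in>V. {u,v}\<in>E}"
  proof
    show "{h\<in>power3_edges E. Inl u \<in> h} \<subseteq> (\<lambda>v. Hd {u,v}) ` {v\<in>V. {u,v}\<in>E}"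
    proof
      fix h assume "h \<in> {h\<in>power3_edges E. Inl u \<in> h}"
      then obtain e where e: "e \<in> E" "h = Hd e" "Inl u \<in> Hd e" unfolding p3e by auto
      then have ue: "u \<in> e" unfolding Hd_def by auto
      obtain a b where ab: "a \<in> V" "b \<in> V" "a \<noteq> b" "e = {a, b}" using edge[OF e(1)] by blast
      show "h \<in> (\<lambda>v. Hd {u,v}) ` {v\<in>V. {u,v}\<in>E}"
      proof (cases "u = a")
        case True then show ?thesis using e ab by auto
      next
        case False then have "u = b" using ue ab by auto
        then show ?thesis using e ab by (auto simp: insert_commute)
      qed
    qed
    show "(\<lambda>v. Hd {u,v}) ` {v\<in>V. {u,v}\<in>E} \<subseteq> {h\<in>power3_edges E. Inl u \<in> h}"
      unfolding p3e Hd_def by auto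
  qed
  have inj: "inj_on (\<lambda>v. Hd {u,v}) {v\<in>V. {u,v}\<in>E}"
  proof (rule inj_onI)
    fix v v' assume v: "v \<in> {v\<in>V. {u,v}\<in>E}" "v' \<in> {v\<in>V. {u,v}\<in>E}" "Hd {u,v} = Hd {u,v'}"
    then have "Inr {u,v} \<in> Hd {u,v'}" unfolding Hd_def by auto
    then have "{u,v} = {u,v'}" unfolding Hd_def by auto
    moreover have "u \<noteq> v" "u \<noteq> v'" using v edge_in by auto
    ultimately show "v = v'" by (auto simp: doubleton_eq_iff)
  qed
  have "(\<Sum>h\<in>{h\<in>power3_edges E. Inl u \<in> h}. \<Prod>j\<in>h - {Inl u}. X j)
      = (\<Sum>v\<in>{v\<in>V. {u,v}\<in>E}. \<Prod>j\<in>Hd {u,v} - {Inl u}. X j)"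
    unfolding set by (rule sum.reindex[OF inj, unfolded comp_def])
  also have "\<dots> = (\<Sum>v\<in>{v\<in>V. {u,v}\<in>E}. X (Inr {u,v}) * X (Inl v))"
  proof (intro sum.cong refl)
    fix v assume "v \<in> {v\<in>V. {u,v}\<in>E}"
    then have "u \<noteq> v" using edge_in by auto
    then have "Hd {u,v} - {Inl u} = {Inr {u,v}, Inl v}" unfolding Hd_def by auto
    then show "(\<Prod>j\<in>Hd {u,v} - {Inl u}. X j) = X (Inr {u,v}) * X (Inl v)" by simp
  qed
  finally show ?thesis .
qed

lemma hsum_Inr:
  fixes X :: "'a + 'a set \<Rightarrow> 'r::comm_ring_1"
  assumes e: "e \<in> E"
  shows "(\<Sum>h\<in>{h\<in>power3_edges E. Inr e \<in> h}. \<Prod>j\<in>h - {Inr e}. X j) = (\<Prod>v\<in>e. X (Inl v))"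
proof -
  have set: "{h\<in>power3_edges E. Inr e \<in> h} = {Hd e}" unfolding p3e Hd_def using e by auto
  have "Hd e - {Inr e} = Inl ` e" unfolding Hd_def by auto
  then show ?thesis unfolding set by (simp add: prod.reindex)
qed

lemma hv_ball: "(\<forall>i\<in>power3_vertices V E. P i) \<longleftrightarrow> (\<forall>u\<in>V. P (Inl u)) \<and> (\<forall>e\<in>E. P (Inr e))"
  unfolding power3_vertices_def by auto

lemma hg_zero: "hg_eigenvalue (power3_vertices V E) (power3_edges E) 0"
proof -
  obtain e0 where e0: "e0 \<in> E" using ne by auto
  define x where "x i = (if i = Inr e0 then (1::complex) else 0)" for i :: "'a + 'a set"
  have pz: "(\<Prod>j\<in>h - {i}. x j) = 0" if h: "h \<in> power3_edges E" for h i
  proof -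
    obtain e where e: "e \<in> E" "h = Hd e" using h unfolding p3e by auto
    obtain a b where ab: "a \<noteq> b" "e = {a, b}" using edge[OF e(1)] by blast
    have "\<exists>w. Inl w \<in> h - {i}" using e ab unfolding Hd_def by (cases "i = Inl a") auto
    then obtain w where w: "Inl w \<in> h - {i}" by blast
    have "finite h" using e ab unfolding Hd_def by simp
    then show ?thesis using w by (intro prod_zero) (auto simp: x_def intro!: bexI[of _ "Inl w"])
  qed
  have "\<forall>i\<in>power3_vertices V E. (\<Sum>h\<in>{h\<in>power3_edges E. i \<in> h}. \<Prod>j\<in>h - {i}. x j) = 0 * (x i)\<^sup>2"
    using pz by simp
  moreover have "Inr e0 \<in> power3_vertices V E" "x (Inr e0) \<noteq> 0" using e0 unfolding power3_vertices_def x_def by auto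
  ultimately show ?thesis unfolding hg_eigenvalue_def by blast
qed

end


context sgraph begin

lemma subs_le: "\<forall>e\<in>E. c e = 1 \<or> c e = -1 \<Longrightarrow> \<bar>subs E S c u v\<bar> \<le> adj E u v"
  unfolding subs_def using signed_le[of c u v] by (auto simp: adj_nonneg)

lemma subs_off: "{u, v} \<notin> E \<Longrightarrow> subs E S c u v = 0"
  unfolding subs_def signed_adj_def by auto

lemma nbsum: "(\<Sum>v\<in>{v\<in>V. {u,v}\<in>E}. f v) = (\<Sum>v\<in>V. if {u,v}\<in>E then f v else 0)"
  by (simp add: sum.inter_filter[OF fin])

lemma hg_construct:
  assumes c: "\<forall>e\<in>E. c e = 1 \<or> c e = -1" and z: "reig V (subs E S c) \<mu> z" and m0: "\<mu> \<noteq> 0"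
  shows "hg_eigenvalue (power3_vertices V E) (power3_edges E) (complex_of_real (root 3 (\<mu>^2)))"
proof -
  let ?B = "subs E S c"
  define y where "y u = root 3 (z u)" for u
  define s where "s = root 3 \<mu>"
  have s0: "s \<noteq> 0" using m0 unfolding s_def by simp
  have s3: "s ^ 3 = \<mu>" unfolding s_def by (simp add: odd_real_root_pow)
  have y3: "y u ^ 3 = z u" for u unfolding y_def by (simp add: odd_real_root_pow)
  have lam: "root 3 (\<mu>^2) = s^2" unfolding s_def by (simp add: real_root_power)
  have zS: "z u = 0" if "u \<in> V" "u \<notin> S" for u
  proof -
    have "mv V ?B z u = 0" unfolding mv_def subs_def using that by simp
    then show ?thesis using z that m0 unfolding reig_def by simp
  qed
  have yS: "y u = 0" if "u \<in> V" "u \<notin> S" for u using zS[OF that] unfolding y_def by simp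
  define X where "X i = (case i of Inl u \<Rightarrow> (y u)^2
     | Inr e \<Rightarrow> (if e \<subseteq> S then c e * (\<Prod>w\<in>e. y w) / s else 0))" for i
  define x where "x i = complex_of_real (X i)" for i
  have eqL: "(\<Sum>v\<in>{v\<in>V. {u,v}\<in>E}. X (Inr {u,v}) * X (Inl v)) = s^2 * (X (Inl u))^2" if u: "u \<in> V" for u
  proof -
    have trm: "X (Inr {u,v}) * X (Inl v) = y u / s * (?B u v * z v)" if v: "v \<in> {v\<in>V. {u,v}\<in>E}" for v
    proof -
      have uv: "{u,v} \<in> E" "u \<noteq> v" "v \<in> V" using v edge_in by auto
      show ?thesis
      proof (cases "u \<in> S \<and> v \<in> S")
        case True
        then have "X (Inr {u,v}) = c {u,v} * (y u * y v) / s" unfolding X_def using uv by simp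
        moreover have "?B u v = c {u,v}" using True uv unfolding subs_def signed_adj_def by simp
        ultimately show ?thesis unfolding X_def using y3[of v] by (simp add: power2_eq_square power3_eq_cube)
      next
        case False
        then have "X (Inr {u,v}) = 0" unfolding X_def by auto
        moreover have "?B u v = 0" using False unfolding subs_def by auto
        ultimately show ?thesis by simp
      qed
    qed
    have "(\<Sum>v\<in>{v\<in>V. {u,v}\<in>E}. X (Inr {u,v}) * X (Inl v)) = (\<Sum>v\<in>{v\<in>V. {u,v}\<in>E}. y u / s * (?B u v * z v))"
      by (rule sum.cong[OF refl trm])
    also have "\<dots> = y u / s * (\<Sum>v\<in>V. ?B u v * z v)"
      unfolding nbsum sum_distrib_left by (intro sum.cong refl) (simp add: subs_off)
    also have "\<dots> = y u / s * (\<mu> * z u)" using z u unfolding reig_def mv_def by simp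
    also have "\<dots> = s^2 * (X (Inl u))^2" unfolding X_def using s0 s3[symmetric] y3[of u, symmetric]
      by (simp add: power2_eq_square power3_eq_cube field_simps)
    finally show ?thesis .
  qed
  have eqR: "(\<Prod>v\<in>e. X (Inl v)) = s^2 * (X (Inr e))^2" if e: "e \<in> E" for e
  proof -
    obtain a b where ab: "a \<in> V" "b \<in> V" "a \<noteq> b" "e = {a,b}" using edge[OF e] by blast
    show ?thesis
    proof (cases "e \<subseteq> S")
      case True
      have "c e * c e = 1" using c e by auto
      then show ?thesis using True ab s0 unfolding X_def
        by (simp add: power2_eq_square field_simps)
    next
      case False
      then have "a \<notin> S \<or> b \<notin> S" using ab by auto
      then have "y a = 0 \<or> y b = 0" using yS ab by auto
      then show ?thesis using False ab unfolding X_def by auto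
    qed
  qed
  have "\<forall>i\<in>power3_vertices V E. (\<Sum>h\<in>{h\<in>power3_edges E. i \<in> h}. \<Prod>j\<in>h - {i}. x j)
          = complex_of_real (root 3 (\<mu>^2)) * (x i)\<^sup>2"
    unfolding hv_ball
  proof (intro conjI ballI)
    fix u assume u: "u \<in> V"
    have "(\<Sum>h\<in>{h\<in>power3_edges E. Inl u \<in> h}. \<Prod>j\<in>h - {Inl u}. x j)
        = (\<Sum>v\<in>{v\<in>V. {u,v}\<in>E}. x (Inr {u,v}) * x (Inl v))" by (rule hsum_Inl[OF u])
    also have "\<dots> = complex_of_real (\<Sum>v\<in>{v\<in>V. {u,v}\<in>E}. X (Inr {u,v}) * X (Inl v))"
      unfolding x_def by simp
    also have "\<dots> = complex_of_real (root 3 (\<mu>^2)) * (x (Inl u))\<^sup>2"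
      unfolding eqL[OF u] lam x_def by simp
    finally show "(\<Sum>h\<in>{h\<in>power3_edges E. Inl u \<in> h}. \<Prod>j\<in>h - {Inl u}. x j)
        = complex_of_real (root 3 (\<mu>^2)) * (x (Inl u))\<^sup>2" .
  next
    fix e assume e: "e \<in> E"
    have "(\<Sum>h\<in>{h\<in>power3_edges E. Inr e \<in> h}. \<Prod>j\<in>h - {Inr e}. x j) = (\<Prod>v\<in>e. x (Inl v))"
      by (rule hsum_Inr[OF e])
    also have "\<dots> = complex_of_real (\<Prod>v\<in>e. X (Inl v))" unfolding x_def by simp
    also have "\<dots> = complex_of_real (root 3 (\<mu>^2)) * (x (Inr e))\<^sup>2"
      unfolding eqR[OF e] lam x_def by simp
    finally show "(\<Sum>h\<in>{h\<in>power3_edges E. Inr e \<in> h}. \<Prod>j\<in>h - {Inr e}. x j)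
        = complex_of_real (root 3 (\<mu>^2)) * (x (Inr e))\<^sup>2" .
  qed
  moreover obtain w where w: "w \<in> V" "z w \<noteq> 0" using z unfolding reig_def by auto
  then have "x (Inl w) \<noteq> 0" "Inl w \<in> power3_vertices V E"
    unfolding x_def X_def y_def power3_vertices_def by auto
  ultimately show ?thesis unfolding hg_eigenvalue_def by blast
qed

end


context sgraph begin

lemma hg_decompose:
  assumes h: "hg_eigenvalue (power3_vertices V E) (power3_edges E) lam" and l0: "lam \<noteq> 0"
  shows "\<exists>S c \<mu> z. (\<forall>e\<in>E. c e = 1 \<or> c e = -1) \<and> reig V (subs E S c) \<mu> z \<and> cmod lam = root 3 (\<mu>^2)"
proof -
  obtain x where nz: "\<exists>i\<in>power3_vertices V E. x i \<noteq> 0"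
    and eqs: "\<forall>i\<in>power3_vertices V E. (\<Sum>h\<in>{h\<in>power3_edges E. i \<in> h}. \<Prod>j\<in>h - {i}. x j) = lam * (x i)\<^sup>2"
    using h unfolding hg_eigenvalue_def by blast
  have eqL: "(\<Sum>v\<in>{v\<in>V. {u,v}\<in>E}. x (Inr {u,v}) * x (Inl v)) = lam * (x (Inl u))\<^sup>2" if u: "u \<in> V" for u
    using eqs hsum_Inl[OF u, of x] u unfolding hv_ball by simp
  have eqR: "(\<Prod>v\<in>e. x (Inl v)) = lam * (x (Inr e))\<^sup>2" if e: "e \<in> E" for e
    using eqs hsum_Inr[OF e, of x] e unfolding hv_ball by simp
  define y where "y u = csqrt (x (Inl u))" for u
  define s where "s = csqrt lam"
  have ys: "(y u)^2 = x (Inl u)" for u unfolding y_def by simp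
  have ss: "s^2 = lam" unfolding s_def by simp
  have s0: "s \<noteq> 0" using l0 ss by auto
  define S where "S = {u\<in>V. x (Inl u) \<noteq> 0}"
  define c where "c e = (if x (Inr e) = (\<Prod>w\<in>e. y w) / s then 1 else (-1::real))" for e
  have c: "\<forall>e\<in>E. c e = 1 \<or> c e = -1" unfolding c_def by auto
  have XR: "x (Inr e) = (if e \<subseteq> S then complex_of_real (c e) * (\<Prod>w\<in>e. y w) / s else 0)" if e: "e \<in> E" for e
  proof -
    obtain a b where ab: "a \<in> V" "b \<in> V" "a \<noteq> b" "e = {a,b}" using edge[OF e] by blast
    have r: "x (Inl a) * x (Inl b) = s^2 * (x (Inr e))^2" using eqR[OF e] ab ss by simp
    show ?thesis
    proof (cases "e \<subseteq> S")
      case True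
      have "((\<Prod>w\<in>e. y w) / s)^2 = (y a)^2 * (y b)^2 / s^2" using ab by (simp add: power_divide power_mult_distrib)
      also have "\<dots> = (x (Inr e))^2" unfolding ys using r s0 by (simp add: field_simps)
      finally have "x (Inr e) = (\<Prod>w\<in>e. y w) / s \<or> x (Inr e) = - ((\<Prod>w\<in>e. y w) / s)"
        using power2_eq_iff by metis
      then show ?thesis using True unfolding c_def by auto
    next
      case False
      then have "a \<notin> S \<or> b \<notin> S" using ab by auto
      then have "x (Inl a) = 0 \<or> x (Inl b) = 0" using ab unfolding S_def by auto
      then have "s^2 * (x (Inr e))^2 = 0" using r by auto
      then show ?thesis using False s0 by simp
    qed
  qed
  let ?B = "subs E S c"
  define z where "z u = (y u)^3" for u
  have ceig: "(\<Sum>v\<in>V. complex_of_real (?B u v) * z v) = s^3 * z u" if u: "u \<in> V" for u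
  proof (cases "u \<in> S")
    case False
    then have "x (Inl u) = 0" using u unfolding S_def by simp
    then have "z u = 0" unfolding z_def y_def by simp
    moreover have "?B u v = 0" for v using False unfolding subs_def by simp
    ultimately show ?thesis by simp
  next
    case True
    have trm: "x (Inr {u,v}) * x (Inl v) = y u / s * (complex_of_real (?B u v) * z v)"
      if v: "v \<in> {v\<in>V. {u,v}\<in>E}" for v
    proof -
      have uv: "{u,v} \<in> E" "u \<noteq> v" "v \<in> V" using v edge_in by auto
      show ?thesis
      proof (cases "v \<in> S")
        case True
        then have "{u,v} \<subseteq> S" using \<open>u \<in> S\<close> by auto
        then have "x (Inr {u,v}) = complex_of_real (c {u,v}) * (y u * y v) / s" using XR[OF uv(1)] uv by simp
        moreover have "?B u v = c {u,v}" using True \<open>u \<in> S\<close> uv unfolding subs_def signed_adj_def by simp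
        ultimately show ?thesis unfolding z_def ys[symmetric] by (simp add: power2_eq_square power3_eq_cube)
      next
        case False
        then have "x (Inl v) = 0" using uv unfolding S_def by simp
        moreover have "?B u v = 0" using False unfolding subs_def by auto
        ultimately show ?thesis by simp
      qed
    qed
    have "y u / s * (\<Sum>v\<in>V. complex_of_real (?B u v) * z v)
        = (\<Sum>v\<in>{v\<in>V. {u,v}\<in>E}. y u / s * (complex_of_real (?B u v) * z v))"
      unfolding nbsum sum_distrib_left by (intro sum.cong refl) (simp add: subs_off)
    also have "\<dots> = (\<Sum>v\<in>{v\<in>V. {u,v}\<in>E}. x (Inr {u,v}) * x (Inl v))"
      by (rule sum.cong[OF refl trm[symmetric]])
    also have "\<dots> = s^2 * (y u ^ 2)^2" unfolding eqL[OF u] ss[symmetric] ys ..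
    finally have eq1: "y u / s * (\<Sum>v\<in>V. complex_of_real (?B u v) * z v) = s^2 * (y u ^ 2)^2" .
    have yu: "y u \<noteq> 0" using True unfolding S_def y_def by simp
    have "s^2 * (y u ^ 2)^2 = y u / s * (s^3 * z u)" unfolding z_def using s0
      by (simp add: field_simps power2_eq_square power3_eq_cube)
    then have "y u / s * (\<Sum>v\<in>V. complex_of_real (?B u v) * z v) = y u / s * (s^3 * z u)" using eq1 by simp
    then show ?thesis using yu s0 by simp
  qed
  have "\<exists>u\<in>V. x (Inl u) \<noteq> 0"
  proof (rule ccontr)
    assume A: "\<not> (\<exists>u\<in>V. x (Inl u) \<noteq> 0)"
    then have "S = {}" unfolding S_def by auto
    then have "\<forall>e\<in>E. x (Inr e) = 0"
    proof (intro ballI)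
      fix e assume e: "e \<in> E"
      obtain a b where "e = {a,b}" using edge[OF e] by blast
      then have "\<not> e \<subseteq> S" using \<open>S = {}\<close> by auto
      then show "x (Inr e) = 0" using XR[OF e] by simp
    qed
    then show False using nz A unfolding power3_vertices_def by auto
  qed
  then obtain w where w: "w \<in> V" "z w \<noteq> 0" unfolding z_def y_def by auto
  have "mat_eigenvalue V ?B (s^3)" unfolding mat_eigenvalue_def using w ceig by blast
  from eig_real_vec[OF fin symm_subs this] obtain \<mu> zz where mz: "s^3 = complex_of_real \<mu>" "reig V ?B \<mu> zz"
    by blast
  have "\<bar>\<mu>\<bar> = (cmod s)^3" using arg_cong[OF mz(1), of cmod] by (simp add: norm_power)
  then have "\<mu>^2 = ((cmod s)^2)^3" by (metis power2_abs power_mult power_mult_distrib mult.commute)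
  then have "root 3 (\<mu>^2) = (cmod s)^2" using real_root_power_cancel[of 3 "(cmod s)^2"] by simp
  moreover have "cmod lam = (cmod s)^2" using ss by (metis norm_power)
  ultimately show ?thesis using c mz(2) by metis
qed

end


lemma sa_restrict: "signed_adj E (restrict c E) = signed_adj E c"
  unfolding signed_adj_def by (intro ext) auto

lemma sa_one: "signed_adj E (\<lambda>_. 1) = adj E"
  unfolding signed_adj_def adj_def by (intro ext) auto

context sgraph begin

lemma qf_two:
  fixes t :: real
  assumes ab: "a \<in> V" "b \<in> V" "a \<noteq> b" "{a,b} \<in> E"
  defines "y \<equiv> \<lambda>u. (if u = a then 1 else 0) + (if u = b then t else (0::real))"
  shows "qf V (adj E) y = 2 * t" "nrm V y = 1 + t^2"
proof -
  have mvy: "mv V (adj E) y u = adj E u a + t * adj E u b" for u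
    unfolding mv_def y_def using ab fin
    by (simp add: sum.distrib distrib_left if_distrib[of "\<lambda>x. _ * x"] cong: if_cong)
  have "qf V (adj E) y = (\<Sum>u\<in>V. y u * (adj E u a + t * adj E u b))" unfolding qf_def bf_mv mvy ..
  also have "\<dots> = (adj E a a + t * adj E a b) + t * (adj E b a + t * adj E b b)"
    unfolding y_def using ab fin by (simp add: sum.distrib distrib_right if_distrib[of "\<lambda>x. x * _"] cong: if_cong)
  also have "\<dots> = 2 * t" using ab(4) adj_diag by (simp add: adj_def insert_commute)
  finally show "qf V (adj E) y = 2 * t" .
  show "nrm V y = 1 + t^2" unfolding nrm_def ip_def y_def using ab fin
    by (simp add: sum.distrib distrib_right distrib_left if_distrib[of "\<lambda>x. x * _"] power2_eq_square cong: if_cong)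
qed

lemma neg_eig: "\<exists>\<nu> z. reig V (adj E) \<nu> z \<and> \<nu> \<le> -1"
proof -
  let ?N = "\<lambda>u w. - adj E u w"
  have sN: "symm V ?N" using symm_adj[of V E] unfolding symm_def by auto
  obtain L q where m: "ismax V ?N L q" using exists_max[OF fin Vne] by blast
  have r: "reig V ?N L q" by (rule ismax_reig[OF fin sN m])
  have r2: "reig V (adj E) (- L) q" using r unfolding reig_def mv_def by (auto simp: sum_negf)
  obtain e where "e \<in> E" using ne by auto
  then obtain a b where ab: "a \<in> V" "b \<in> V" "a \<noteq> b" "{a,b} \<in> E" using edge by blast
  define y where "y \<equiv> \<lambda>u. (if u = a then 1 else 0) + (if u = b then -1 else (0::real))"
  have q: "qf V (adj E) y = -2" and n: "nrm V y = 2" using qf_two[OF ab, of "-1"] unfolding y_def by simp_all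
  have "qf V ?N y = - qf V (adj E) y" unfolding qf_def bf_def by (simp add: sum_negf)
  then have "2 \<le> L * 2" using m q n unfolding ismax_def by (metis minus_minus)
  then have "- L \<le> -1" by simp
  then show ?thesis using r2 by blast
qed

definition LMset where "LMset = {\<mu>. mat_eigenvalue V (adj E) (complex_of_real \<mu>)}"

lemma LM_fin: "finite LMset"
proof -
  have "LMset = complex_of_real -` {c. mat_eigenvalue V (adj E) c}" unfolding LMset_def by auto
  then show ?thesis using finite_vimageI[OF finite_eigs[OF fin] inj_of_real] by simp
qed

lemma LM_le: "reig V (adj E) \<nu> z \<Longrightarrow> lambda_min V E \<le> \<nu>"
  unfolding lambda_min_def min_eigenvalue_def
  by (rule Min_le[OF LM_fin[unfolded LMset_def]]) (simp add: reig_mat_eig)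

lemma LM_eig: "\<exists>z. reig V (adj E) (lambda_min V E) z"
proof -
  obtain p where p: "ismax V (adj E) rho p" using rho_ismax unfolding rho_def by blast
  have "rho \<in> LMset" unfolding LMset_def using reig_mat_eig[OF ismax_reig[OF fin symm_adj p]] by simp
  then have "lambda_min V E \<in> LMset"
    unfolding lambda_min_def min_eigenvalue_def LMset_def[symmetric] by (intro Min_in LM_fin) auto
  then have "mat_eigenvalue V (adj E) (complex_of_real (lambda_min V E))" unfolding LMset_def by simp
  from eig_real_vec[OF fin symm_adj this] show ?thesis by auto
qed

lemma LM_neg: "lambda_min V E \<le> -1"
  using neg_eig LM_le by (meson order_trans)

lemma sgnv_Sw: "\<forall>u\<in>V. z u \<noteq> 0 \<Longrightarrow> sgnv z \<in> Sw"
  unfolding sgnv_def Sw_def by (auto simp: sgn_if)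

lemma LM_lt: assumes "\<not> is_bipartite V E" shows "\<bar>lambda_min V E\<bar> < rho"
proof -
  obtain z where z: "reig V (adj E) (lambda_min V E) z" using LM_eig by blast
  have le: "\<bar>lambda_min V E\<bar> \<le> rho" using eig_bound[OF z] by (simp add: adj_nonneg)
  show ?thesis
  proof (rule ccontr)
    assume "\<not> ?thesis"
    then have eq: "\<bar>lambda_min V E\<bar> = rho" using le by simp
    have z1: "reig V (signed_adj E (\<lambda>_. 1)) (lambda_min V E) z" using z sa_one by metis
    have "lambda_min V E \<noteq> rho" using LM_neg rho_pos by simp
    then have "(\<forall>u\<in>V. z u \<noteq> 0) \<and> (\<forall>e\<in>E. (1::real) = - (\<Prod>w\<in>e. sgnv z w))"
      using sign_eq[of "\<lambda>_. 1", OF _ z1 eq] by auto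
    then have "sgnv z \<in> Sw" "\<forall>e\<in>E. (\<Prod>w\<in>e. sgnv z w) = -1" using sgnv_Sw by auto
    then show False using assms bip_iff by blast
  qed
qed

definition Gset where "Gset = {spec_radius V (signed_adj E \<pi>) | \<pi>.
      (\<forall>e\<in>E. \<pi> e = 1 \<or> \<pi> e = -1) \<and> spec_radius V (signed_adj E \<pi>) < graph_rho V E}"

lemma Gset_fin: "finite Gset"
proof -
  have "Gset \<subseteq> (\<lambda>c. spec_radius V (signed_adj E c)) ` Sig"
  proof
    fix r assume "r \<in> Gset"
    then obtain \<pi> where \<pi>: "\<forall>e\<in>E. \<pi> e = 1 \<or> \<pi> e = -1" "r = spec_radius V (signed_adj E \<pi>)"
      unfolding Gset_def by auto
    have "restrict \<pi> E \<in> Sig" using \<pi>(1) unfolding Sig_def by auto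
    moreover have "r = spec_radius V (signed_adj E (restrict \<pi> E))" using \<pi>(2) sa_restrict by metis
    ultimately show "r \<in> (\<lambda>c. spec_radius V (signed_adj E c)) ` Sig" by blast
  qed
  then show ?thesis using finite_subset finSig by blast
qed

lemma sig_pm: "c \<in> Sig \<Longrightarrow> \<forall>e\<in>E. c e = 1 \<or> c e = -1"
  unfolding Sig_def using PiE_mem[of c E "\<lambda>_. {-1,1}"] by auto

lemma sr_signed_le: assumes c: "\<forall>e\<in>E. c e = 1 \<or> c e = -1" shows "spec_radius V (signed_adj E c) \<le> rho"
proof -
  obtain \<mu> z where z: "reig V (signed_adj E c) \<mu> z" "\<bar>\<mu>\<bar> = spec_radius V (signed_adj E c)"
    using sr_attained[OF fin Vne symm_signed_adj] by blast
  show ?thesis using eig_bound[OF z(1) signed_le[OF c]] z(2) by simp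
qed

lemma phi_eq_iff: "restrict c E = phi s \<longleftrightarrow> (\<forall>e\<in>E. c e = (\<Prod>w\<in>e. s w))"
  unfolding phi_def by (metis restrict_apply' restrict_ext)
lemma negs_eq_iff: "restrict c E = negs (phi s) \<longleftrightarrow> (\<forall>e\<in>E. c e = - (\<Prod>w\<in>e. s w))"
  unfolding phi_def negs_def by (auto simp: restrict_def fun_eq_iff)

lemma sr_signed_eq: assumes c: "\<forall>e\<in>E. c e = 1 \<or> c e = -1" and eq: "spec_radius V (signed_adj E c) = rho"
  shows "restrict c E \<in> phi ` Sw \<union> negs ` phi ` Sw"
proof -
  obtain \<mu> z where z: "reig V (signed_adj E c) \<mu> z" "\<bar>\<mu>\<bar> = spec_radius V (signed_adj E c)"
    using sr_attained[OF fin Vne symm_signed_adj] by blast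
  from sign_eq[OF c z(1)] z(2) eq have
    s: "(\<forall>u\<in>V. z u \<noteq> 0) \<and> ((\<forall>e\<in>E. c e = (\<Prod>w\<in>e. sgnv z w)) \<or> (\<forall>e\<in>E. c e = - (\<Prod>w\<in>e. sgnv z w)))"
    by auto
  then have sw: "sgnv z \<in> Sw" using sgnv_Sw by auto
  from s show ?thesis
  proof (elim conjE disjE)
    assume "\<forall>e\<in>E. c e = (\<Prod>w\<in>e. sgnv z w)"
    then have "restrict c E = phi (sgnv z)" using phi_eq_iff by blast
    then show ?thesis using sw by blast
  next
    assume "\<forall>e\<in>E. c e = - (\<Prod>w\<in>e. sgnv z w)"
    then have "restrict c E = negs (phi (sgnv z))" using negs_eq_iff by blast
    then show ?thesis using sw by blast
  qed
qed

lemma Gset_ne: assumes "\<not> is_tree V E" "\<not> (is_unicyclic V E \<and> \<not> is_bipartite V E)" shows "Gset \<noteq> {}"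
proof -
  obtain c where c: "c \<in> Sig" "c \<notin> phi ` Sw \<union> negs ` phi ` Sw" using exists_bad[OF assms] by blast
  have pm: "\<forall>e\<in>E. c e = 1 \<or> c e = -1" by (rule sig_pm[OF c(1)])
  have "restrict c E = c" using c(1) unfolding Sig_def by (simp add: PiE_restrict)
  then have "spec_radius V (signed_adj E c) \<noteq> rho" using sr_signed_eq[OF pm] c(2) by auto
  then have "spec_radius V (signed_adj E c) < graph_rho V E" using sr_signed_le[OF pm] unfolding rho_def by simp
  then show ?thesis unfolding Gset_def using pm by blast
qed

lemma Rg_props: assumes "Gset \<noteq> {}"
  shows "rho_Gamma V E < rho" "rho_Gamma V E \<ge> 0"
    "\<exists>\<pi>. (\<forall>e\<in>E. \<pi> e = 1 \<or> \<pi> e = -1) \<and> rho_Gamma V E = spec_radius V (signed_adj E \<pi>)"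
proof -
  have "rho_Gamma V E \<in> Gset" unfolding rho_Gamma_def Gset_def[symmetric] by (rule Max_in[OF Gset_fin assms])
  then obtain \<pi> where \<pi>: "\<forall>e\<in>E. \<pi> e = 1 \<or> \<pi> e = -1" "rho_Gamma V E = spec_radius V (signed_adj E \<pi>)"
    "spec_radius V (signed_adj E \<pi>) < graph_rho V E" unfolding Gset_def by auto
  then show "rho_Gamma V E < rho" unfolding rho_def by simp
  show "\<exists>\<pi>. (\<forall>e\<in>E. \<pi> e = 1 \<or> \<pi> e = -1) \<and> rho_Gamma V E = spec_radius V (signed_adj E \<pi>)" using \<pi> by blast
  obtain \<mu> z where z: "reig V (signed_adj E \<pi>) \<mu> z" "\<bar>\<mu>\<bar> = spec_radius V (signed_adj E \<pi>)"
    using sr_attained[OF fin Vne symm_signed_adj] by blast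
  show "rho_Gamma V E \<ge> 0" using z(2) \<pi>(2) by simp
qed

lemma Rg_ge: assumes "\<forall>e\<in>E. \<pi> e = 1 \<or> \<pi> e = -1" "spec_radius V (signed_adj E \<pi>) < rho"
  shows "spec_radius V (signed_adj E \<pi>) \<le> rho_Gamma V E"
  unfolding rho_Gamma_def by (rule Max_ge[OF Gset_fin[unfolded Gset_def]]) (use assms in \<open>auto simp: rho_def\<close>)

end


context sgraph begin

definition Rval where "Rval = (if is_tree V E then rho_V V E
     else if is_unicyclic V E \<and> \<not> is_bipartite V E then max (rho_V V E) \<bar>lambda_min V E\<bar>
     else if is_bipartite V E then max (rho_V V E) (rho_Gamma V E)
     else max (rho_V V E) (max (rho_Gamma V E) \<bar>lambda_min V E\<bar>))"

definition famE where "famE S c \<mu> z = ((\<forall>e\<in>E. c e = 1 \<or> c e = -1) \<and> reig V (subs E S c) \<mu> z)"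

lemma Rval_ge_V: "rho_V V E \<le> Rval" unfolding Rval_def by auto
lemma Rval_nonneg: "Rval \<ge> 0" using Rval_ge_V rhoV_nonneg by linarith

lemma eigA:
  assumes w: "reig V (adj E) \<nu> w" and lt: "\<bar>\<nu>\<bar> < rho"
  shows "\<bar>\<nu>\<bar> \<le> Rval"
proof (cases "\<nu> \<ge> 0")
  case True
  then have "\<nu> \<le> rho_V V E" using interlace[OF w] lt by simp
  then show ?thesis using True Rval_ge_V by simp
next
  case False
  show ?thesis
  proof (cases "is_bipartite V E")
    case True
    then obtain s0 where s0: "s0 \<in> Sw" "\<forall>e\<in>E. (\<Prod>w\<in>e. s0 w) = -1" using bip_iff by blast
    have w1: "reig V (signed_adj E (\<lambda>_. 1)) \<nu> w" using w sa_one by metis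
    have "reig V (adj E) ((-1) * \<nu>) (\<lambda>u. s0 u * w u)"
      by (rule switch[OF _ _ _ w1]) (use s0 sw_val in auto)
    then have "- \<nu> \<le> rho_V V E" using interlace lt by force
    then show ?thesis using False Rval_ge_V by simp
  next
    case nb: False
    then have nt: "\<not> is_tree V E" using tree_bip by blast
    have "lambda_min V E \<le> \<nu>" by (rule LM_le[OF w])
    then have "\<bar>\<nu>\<bar> \<le> \<bar>lambda_min V E\<bar>" using False by simp
    also have "\<dots> \<le> Rval" unfolding Rval_def using nt nb by auto
    finally show ?thesis .
  qed
qed

lemma key:
  assumes f: "famE S c \<mu> z" and lt: "\<bar>\<mu>\<bar> < rho"
  shows "\<bar>\<mu>\<bar> \<le> Rval"
proof -
  have c: "\<forall>e\<in>E. c e = 1 \<or> c e = -1" and z: "reig V (subs E S c) \<mu> z" using f unfolding famE_def by auto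
  show ?thesis
  proof (cases "V \<subseteq> S")
    case False
    then obtain v where v: "v \<in> V" "v \<notin> S" by auto
    show ?thesis
    proof (cases "\<mu> = 0")
      case True then show ?thesis using Rval_nonneg by simp
    next
      case m0: False
      have "mv V (subs E S c) z v = 0" unfolding mv_def subs_def using v by simp
      then have zv: "z v = 0" using z v m0 unfolding reig_def by simp
      have "\<bar>\<mu>\<bar> * nrm V z \<le> qf V (adj E) (\<lambda>u. \<bar>z u\<bar>)" by (rule triangle[OF z subs_le[OF c]])
      also have "\<dots> \<le> rho_V V E * nrm V (\<lambda>u. \<bar>z u\<bar>)" by (rule sub_bound[OF v(1)]) (simp add: zv)
      also have "nrm V (\<lambda>u. \<bar>z u\<bar>) = nrm V z" unfolding nrm_def ip_def by (simp add: abs_mult_self_eq)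
      finally have "\<bar>\<mu>\<bar> * nrm V z \<le> rho_V V E * nrm V z" .
      moreover have "nrm V z > 0" using z nrm_pos[OF fin] unfolding reig_def by blast
      ultimately have "\<bar>\<mu>\<bar> \<le> rho_V V E" by simp
      then show ?thesis using Rval_ge_V by simp
    qed
  next
    case True
    have zs: "reig V (signed_adj E c) \<mu> z"
      by (rule reig_mcong[OF _ z]) (use True in \<open>auto simp: subs_def\<close>)
    have pm1: "(1::real) = 1 \<or> (1::real) = -1" "(-1::real) = 1 \<or> (-1::real) = -1" by auto
    have inSig: "restrict c E \<in> Sig" using c unfolding Sig_def by auto
    show ?thesis
    proof (cases "restrict c E \<in> phi ` Sw")
      case True
      then obtain s where s: "s \<in> Sw" "restrict c E = phi s" by auto
      have "\<forall>e\<in>E. c e = 1 * (\<Prod>w\<in>e. s w)" using s(2) phi_eq_iff by simp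
      then have "reig V (adj E) (1 * \<mu>) (\<lambda>u. s u * z u)"
        by (intro switch[OF _ pm1(1) _ zs]) (use s(1) sw_val in auto)
      then show ?thesis using eigA lt by simp
    next
      case nphi: False
      show ?thesis
      proof (cases "restrict c E \<in> negs ` phi ` Sw")
        case True
        then obtain s where s: "s \<in> Sw" "restrict c E = negs (phi s)" by auto
        have "\<forall>e\<in>E. c e = (-1) * (\<Prod>w\<in>e. s w)" using s(2) negs_eq_iff by simp
        then have "reig V (adj E) ((-1) * \<mu>) (\<lambda>u. s u * z u)"
          by (intro switch[OF _ pm1(2) _ zs]) (use s(1) sw_val in auto)
        then show ?thesis using eigA[of "- \<mu>"] lt by simp
      next
        case False
        then have nu: "restrict c E \<notin> phi ` Sw \<union> negs ` phi ` Sw" using nphi by simp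
        have "spec_radius V (signed_adj E c) \<noteq> rho" using sr_signed_eq[OF c] nu by auto
        then have srl: "spec_radius V (signed_adj E c) < rho" using sr_signed_le[OF c] by simp
        have "\<bar>\<mu>\<bar> \<le> spec_radius V (signed_adj E c)"
          using sr_ge[OF fin reig_mat_eig[OF zs]] by simp
        also have "\<dots> \<le> rho_Gamma V E" by (rule Rg_ge[OF c srl])
        finally have mg: "\<bar>\<mu>\<bar> \<le> rho_Gamma V E" .
        have nt: "\<not> is_tree V E" using tree_all nu inSig by auto
        have nuc: "\<not> (is_unicyclic V E \<and> \<not> is_bipartite V E)" using uni_all nu inSig by auto
        have "rho_Gamma V E \<le> Rval" unfolding Rval_def using nt nuc by auto
        then show ?thesis using mg by simp
      qed
    qed
  qed
qed


lemma fam_A: assumes "reig V (adj E) \<nu> w" shows "famE V (\<lambda>_. 1) \<nu> w"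
  unfolding famE_def
proof (intro conjI)
  show "reig V (subs E V (\<lambda>_. 1)) \<nu> w"
    by (rule reig_mcong[OF _ assms]) (simp add: subs_def sa_one)
qed simp

lemma fam_signed: assumes "\<forall>e\<in>E. \<pi> e = 1 \<or> \<pi> e = -1" "reig V (signed_adj E \<pi>) \<nu> w"
  shows "famE V \<pi> \<nu> w"
  unfolding famE_def using assms(1)
proof (intro conjI)
  show "reig V (subs E V \<pi>) \<nu> w"
    by (rule reig_mcong[OF _ assms(2)]) (simp add: subs_def)
qed simp

lemma fam_bound: "famE S c \<mu> z \<Longrightarrow> \<bar>\<mu>\<bar> \<le> rho"
  unfolding famE_def using eig_bound subs_le by blast

lemma rv_real: "\<exists>S c \<mu> z. famE S c \<mu> z \<and> \<bar>\<mu>\<bar> = rho_V V E"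
proof -
  obtain v0 where v0: "v0 \<in> V" "rho_V V E = graph_rho (V - {v0}) (Ev v0)" using rhoV_attained by blast
  let ?W = "V - {v0}"
  obtain \<mu> z where z: "reig ?W (adj (Ev v0)) \<mu> z" "\<bar>\<mu>\<bar> = graph_rho ?W (Ev v0)"
    using sr_attained[OF finite_Diff[OF fin] Wne symm_adj] unfolding graph_rho_def by blast
  define z' where "z' u = (if u \<in> ?W then z u else 0)" for u
  have "reig V (subs E ?W (\<lambda>_. 1)) \<mu> z'"
    unfolding reig_def
  proof (intro conjI ballI)
    show "\<exists>u\<in>V. z' u \<noteq> 0" using z(1) unfolding reig_def z'_def by auto
    fix u assume u: "u \<in> V"
    show "mv V (subs E ?W (\<lambda>_. 1)) z' u = \<mu> * z' u"
    proof (cases "u = v0")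
      case True then show ?thesis unfolding mv_def subs_def z'_def by simp
    next
      case False
      have "mv V (subs E ?W (\<lambda>_. 1)) z' u = (\<Sum>w\<in>?W. subs E ?W (\<lambda>_. 1) u w * z' w)"
        unfolding mv_def by (rule sum_drop0[OF fin v0(1)]) (simp add: z'_def)
      also have "\<dots> = mv ?W (adj (Ev v0)) z u"
        unfolding mv_def using False u by (intro sum.cong refl) (simp add: subs_def z'_def sa_one adj_Ev)
      also have "\<dots> = \<mu> * z' u" using z(1) u False unfolding reig_def z'_def by simp
      finally show ?thesis .
    qed
  qed
  then have "famE ?W (\<lambda>_. 1) \<mu> z'" unfolding famE_def by simp
  then show ?thesis using z(2) v0(2) by auto
qed

lemma lm_real: "\<exists>S c \<mu> z. famE S c \<mu> z \<and> \<bar>\<mu>\<bar> = \<bar>lambda_min V E\<bar>"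
  using LM_eig fam_A by blast

lemma rg_real: assumes "Gset \<noteq> {}" shows "\<exists>S c \<mu> z. famE S c \<mu> z \<and> \<bar>\<mu>\<bar> = rho_Gamma V E"
proof -
  obtain \<pi> where \<pi>: "\<forall>e\<in>E. \<pi> e = 1 \<or> \<pi> e = -1" "rho_Gamma V E = spec_radius V (signed_adj E \<pi>)"
    using Rg_props(3)[OF assms] by blast
  obtain \<mu> z where z: "reig V (signed_adj E \<pi>) \<mu> z" "\<bar>\<mu>\<bar> = spec_radius V (signed_adj E \<pi>)"
    using sr_attained[OF fin Vne symm_signed_adj] by blast
  show ?thesis using fam_signed[OF \<pi>(1) z(1)] z(2) \<pi>(2) by auto
qed

lemma max_real:
  assumes "\<exists>S c \<mu> z. famE S c \<mu> z \<and> \<bar>\<mu>\<bar> = a" "\<exists>S c \<mu> z. famE S c \<mu> z \<and> \<bar>\<mu>\<bar> = b"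
  shows "\<exists>S c \<mu> z. famE S c \<mu> z \<and> \<bar>\<mu>\<bar> = max a b"
  using assms by (cases "a \<le> b") (auto simp: max_def)

lemma Rval_real_lt: "(\<exists>S c \<mu> z. famE S c \<mu> z \<and> \<bar>\<mu>\<bar> = Rval) \<and> Rval < rho"
proof -
  consider (t) "is_tree V E" | (u) "\<not> is_tree V E" "is_unicyclic V E \<and> \<not> is_bipartite V E"
    | (b) "\<not> is_tree V E" "\<not> (is_unicyclic V E \<and> \<not> is_bipartite V E)" "is_bipartite V E"
    | (o) "\<not> is_tree V E" "\<not> (is_unicyclic V E \<and> \<not> is_bipartite V E)" "\<not> is_bipartite V E" by blast
  then show ?thesis
  proof cases
    case t then show ?thesis unfolding Rval_def using rv_real rhoV_lt by simp
  next
    case u then show ?thesis unfolding Rval_def using max_real[OF rv_real lm_real] rhoV_lt LM_lt by simp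
  next
    case b
    have g: "Gset \<noteq> {}" using Gset_ne b by blast
    show ?thesis unfolding Rval_def using b max_real[OF rv_real rg_real[OF g]] rhoV_lt Rg_props(1)[OF g] by simp
  next
    case o
    have g: "Gset \<noteq> {}" using Gset_ne o by blast
    show ?thesis unfolding Rval_def using o max_real[OF rv_real max_real[OF rg_real[OF g] lm_real]]
      rhoV_lt Rg_props(1)[OF g] LM_lt by simp
  qed
qed

end


lemma rmax: assumes "0 \<le> a" "0 \<le> (b::real)"
  shows "root 3 ((max a b)^2) = max (root 3 (a^2)) (root 3 (b^2))"
proof (cases "a \<le> b")
  case True
  then have "a^2 \<le> b^2" using assms by (simp add: power_mono)
  then show ?thesis using True by (simp add: max_def)
next
  case False
  then have "b^2 \<le> a^2" using assms by (simp add: power_mono)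
  then show ?thesis using False by (simp add: max_def)
qed

context sgraph begin

definition HS where "HS = {lam. hg_eigenvalue (power3_vertices V E) (power3_edges E) lam}"

lemma T_sub: "t \<in> cmod ` HS \<Longrightarrow> t = 0 \<or> (\<exists>S c \<mu> z. famE S c \<mu> z \<and> t = root 3 (\<mu>^2))"
proof -
  assume "t \<in> cmod ` HS"
  then obtain lam where l: "hg_eigenvalue (power3_vertices V E) (power3_edges E) lam" "t = cmod lam"
    unfolding HS_def by auto
  show ?thesis
  proof (cases "lam = 0")
    case True then show ?thesis using l by simp
  next
    case False
    from hg_decompose[OF l(1) False] show ?thesis using l(2) unfolding famE_def by blast
  qed
qed

lemma T_zero: "0 \<in> cmod ` HS"
  using hg_zero unfolding HS_def by (metis (mono_tags) image_eqI mem_Collect_eq norm_zero)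

lemma T_sup: "famE S c \<mu> z \<Longrightarrow> root 3 (\<mu>^2) \<in> cmod ` HS"
proof -
  assume f: "famE S c \<mu> z"
  show ?thesis
  proof (cases "\<mu> = 0")
    case True then show ?thesis using T_zero by simp
  next
    case False
    have "hg_eigenvalue (power3_vertices V E) (power3_edges E) (complex_of_real (root 3 (\<mu>^2)))"
      using hg_construct False f unfolding famE_def by blast
    moreover have "cmod (complex_of_real (root 3 (\<mu>^2))) = root 3 (\<mu>^2)" by simp
    ultimately show ?thesis unfolding HS_def by (metis (mono_tags) image_eqI mem_Collect_eq)
  qed
qed

lemma T_fin: "finite (cmod ` HS)"
proof -
  define FB where "FB = (\<lambda>(S, c). subs E S c) ` (Pow V \<times> Sig)"
  define F where "F = {0} \<union> (\<Union>B\<in>FB. (\<lambda>\<mu>. root 3 (\<mu>^2)) ` {\<mu>. mat_eigenvalue V B (complex_of_real \<mu>)})"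
  have "cmod ` HS \<subseteq> F"
  proof
    fix t assume "t \<in> cmod ` HS"
    from T_sub[OF this] show "t \<in> F"
    proof
      assume "t = 0" then show ?thesis unfolding F_def by simp
    next
      assume "\<exists>S c \<mu> z. famE S c \<mu> z \<and> t = root 3 (\<mu>^2)"
      then obtain S c \<mu> z where f: "famE S c \<mu> z" "t = root 3 (\<mu>^2)" by blast
      have c: "\<forall>e\<in>E. c e = 1 \<or> c e = -1" and z: "reig V (subs E S c) \<mu> z" using f unfolding famE_def by auto
      have "reig V (subs E (S \<inter> V) (restrict c E)) \<mu> z"
        by (rule reig_mcong[OF _ z]) (simp add: subs_def sa_restrict)
      then have "mat_eigenvalue V (subs E (S \<inter> V) (restrict c E)) (complex_of_real \<mu>)" by (rule reig_mat_eig)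
      moreover have "subs E (S \<inter> V) (restrict c E) \<in> FB"
        unfolding FB_def using c by (intro image_eqI[of _ _ "(S \<inter> V, restrict c E)"]) (auto simp: Sig_def)
      ultimately show ?thesis unfolding F_def using f(2) by blast
    qed
  qed
  moreover have "finite F"
  proof -
    have "finite FB" unfolding FB_def using fin finSig by simp
    moreover have "finite {\<mu>. mat_eigenvalue V B (complex_of_real \<mu>)}" for B
    proof -
      have "{\<mu>. mat_eigenvalue V B (complex_of_real \<mu>)} = complex_of_real -` {c. mat_eigenvalue V B c}" by auto
      then show ?thesis using finite_vimageI[OF finite_eigs[OF fin] inj_of_real] by simp
    qed
    ultimately show ?thesis unfolding F_def by auto
  qed
  ultimately show ?thesis using finite_subset by blast
qed

lemma root_sq_mono: "\<bar>a\<bar> \<le> \<bar>b\<bar> \<Longrightarrow> root 3 (a^2) \<le> root 3 ((b::real)^2)"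
  using abs_le_square_iff[of a b] by (simp add: real_root_le_iff)

lemma Lambda3_eq: "Lambda3 V E = root 3 (Rval^2)"
proof -
  let ?T = "cmod ` HS"
  obtain p where p: "ismax V (adj E) rho p" using rho_ismax unfolding rho_def by blast
  have frho: "famE V (\<lambda>_. 1) rho p" by (rule fam_A[OF ismax_reig[OF fin symm_adj p]])
  have rho0: "rho \<ge> 0" using rho_pos by simp
  have m: "Max ?T = root 3 (rho^2)"
  proof (rule Max_eqI[OF T_fin])
    show "root 3 (rho^2) \<in> ?T" by (rule T_sup[OF frho])
    fix t assume "t \<in> ?T"
    from T_sub[OF this] show "t \<le> root 3 (rho^2)"
    proof
      assume "t = 0" then show ?thesis by simp
    next
      assume "\<exists>S c \<mu> z. famE S c \<mu> z \<and> t = root 3 (\<mu>^2)"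
      then obtain S c \<mu> z where f: "famE S c \<mu> z" "t = root 3 (\<mu>^2)" by blast
      have "\<bar>\<mu>\<bar> \<le> \<bar>rho\<bar>" using fam_bound[OF f(1)] rho0 by simp
      then show ?thesis using f(2) root_sq_mono by simp
    qed
  qed
  obtain S0 c0 \<mu>0 z0 where f0: "famE S0 c0 \<mu>0 z0" "\<bar>\<mu>0\<bar> = Rval" and Rlt: "Rval < rho"
    using Rval_real_lt by blast
  have "{r. \<exists>\<mu>\<in>HS. r = cmod \<mu> \<and> r < root 3 (rho^2)} = {r\<in>?T. r < root 3 (rho^2)}" by auto
  moreover have "Max {r\<in>?T. r < root 3 (rho^2)} = root 3 (Rval^2)"
  proof (rule Max_eqI)
    show "finite {r\<in>?T. r < root 3 (rho^2)}" using T_fin by simp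
    have "root 3 (\<mu>0^2) \<in> ?T" by (rule T_sup[OF f0(1)])
    moreover have "\<mu>0^2 = Rval^2" using f0(2) by (metis power2_abs)
    moreover have "Rval^2 < rho^2" using Rlt Rval_nonneg by (simp add: power_strict_mono)
    ultimately show "root 3 (Rval^2) \<in> {r\<in>?T. r < root 3 (rho^2)}" by simp
    fix r assume r: "r \<in> {r\<in>?T. r < root 3 (rho^2)}"
    have rT: "r \<in> ?T" using r by simp
    from T_sub[OF rT] show "r \<le> root 3 (Rval^2)"
    proof
      assume "r = 0" then show ?thesis using Rval_nonneg by simp
    next
      assume "\<exists>S c \<mu> z. famE S c \<mu> z \<and> r = root 3 (\<mu>^2)"
      then obtain S c \<mu> z where f: "famE S c \<mu> z" "r = root 3 (\<mu>^2)" by blast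
      have "\<mu>^2 < rho^2" using r f(2) by simp
      then have "\<bar>\<mu>\<bar> < rho" using rho0 by (metis abs_le_square_iff abs_of_nonneg not_le)
      then have "\<bar>\<mu>\<bar> \<le> Rval" by (rule key[OF f(1)])
      then have "\<bar>\<mu>\<bar> \<le> \<bar>Rval\<bar>" by simp
      then show ?thesis using f(2) root_sq_mono by simp
    qed
  qed
  ultimately show ?thesis
    unfolding Lambda3_def second_largest_modulus_def Let_def HS_def[symmetric] m by simp
qed

lemma main_loc: "Lambda3 V E =
    (if is_tree V E then root 3 ((rho_V V E)\<^sup>2)
     else if is_unicyclic V E \<and> \<not> is_bipartite V E then
       max (root 3 ((rho_V V E)\<^sup>2)) (root 3 ((lambda_min V E)\<^sup>2))
     else if is_bipartite V E then
       max (root 3 ((rho_V V E)\<^sup>2)) (root 3 ((rho_Gamma V E)\<^sup>2))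
     else Max {root 3 ((rho_V V E)\<^sup>2), root 3 ((rho_Gamma V E)\<^sup>2),
               root 3 ((lambda_min V E)\<^sup>2)})"
proof -
  have lm: "root 3 ((lambda_min V E)\<^sup>2) = root 3 (\<bar>lambda_min V E\<bar>\<^sup>2)" by simp
  have v0: "rho_V V E \<ge> 0" by (rule rhoV_nonneg)
  show ?thesis
  proof (cases "is_tree V E")
    case True then show ?thesis unfolding Lambda3_eq Rval_def by simp
  next
    case nt: False
    show ?thesis
    proof (cases "is_unicyclic V E \<and> \<not> is_bipartite V E")
      case True then show ?thesis unfolding Lambda3_eq Rval_def lm using nt v0 rmax by simp
    next
      case nu: False
      have g0: "rho_Gamma V E \<ge> 0" using Rg_props(2)[OF Gset_ne[OF nt nu]] .
      show ?thesis
      proof (cases "is_bipartite V E")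
        case True then show ?thesis unfolding Lambda3_eq Rval_def using nt nu v0 g0 rmax by simp
      next
        case False
        have "Max {root 3 ((rho_V V E)\<^sup>2), root 3 ((rho_Gamma V E)\<^sup>2), root 3 ((lambda_min V E)\<^sup>2)}
          = max (root 3 ((rho_V V E)\<^sup>2)) (max (root 3 ((rho_Gamma V E)\<^sup>2)) (root 3 ((lambda_min V E)\<^sup>2)))"
          by simp
        also have "\<dots> = root 3 ((max (rho_V V E) (max (rho_Gamma V E) \<bar>lambda_min V E\<bar>))\<^sup>2)"
          unfolding lm using v0 g0 by (simp add: rmax)
        finally show ?thesis unfolding Lambda3_eq Rval_def using nt nu False by simp
      qed
    qed
  qed
qed

end

theorem mainTheorem5:
  fixes V :: "'a set" and E :: "'a set set"
  assumes "simple_graph V E" and "graph_connected V E" and "E \<noteq> {}"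
  shows "Lambda3 V E =
    (if is_tree V E then root 3 ((rho_V V E)\<^sup>2)
     else if is_unicyclic V E \<and> \<not> is_bipartite V E then
       max (root 3 ((rho_V V E)\<^sup>2)) (root 3 ((lambda_min V E)\<^sup>2))
     else if is_bipartite V E then
       max (root 3 ((rho_V V E)\<^sup>2)) (root 3 ((rho_Gamma V E)\<^sup>2))
     else Max {root 3 ((rho_V V E)\<^sup>2), root 3 ((rho_Gamma V E)\<^sup>2),
               root 3 ((lambda_min V E)\<^sup>2)})"
proof -
  interpret sgraph V E using assms by (unfold_locales)
  show ?thesis by (rule main_loc)
qed


end
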